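(* Let $\mathcal C$ be a multi-Reedy category such that $\mathcal C(c,d)$ is nonempty for all objects $c,d$ of $\mathcal C$. If $\mathcal C$ (with its underlying Reedy structure) is an EZ-Reedy category, then so is $\Theta\mathcal C$ (with the Reedy structure underlying its multi-Reedy structure described in the context).
   Context: Multimorphisms: for objects $c,d_1,\dots,d_m$ ($m\ge0$) of a small category $\mathcal C$, a multimorphism $c\to d_1,\dots,d_m$ is a tuple $(\alpha_s\colon c\to d_s)_s$ of morphisms; these form a symmetric multicategory $\mathcal C( * )$ (composition by precomposition with a morphism and by postcomposition of each output with a multimorphism, collecting outputs; outputs may be permuted). A multi-Reedy category is a small category $\mathcal C$ with a wide subcategory $\mathcal C^-$, a wide sub-multicategory $\mathcal C^+( * )\subseteq\mathcal C( * )$ and $\deg\colon\mathrm{ob}\,\mathcal C\to\mathbb N$ such that every multimorphism factors uniquely as a morphism of $\mathcal C^-$ followed by a multimorphism of $\mathcal C^+( * )$; every $c\to d_1,\dots,d_m$ in $\mathcal C^+( * )$ has $\deg c\le\sum\deg d_i$; single-output morphisms of $\mathcal C^+( * )$ preserve degree only if identities; morphisms of $\mathcal C^-$ weakly decrease degree, strictly unless identities. Its underlying Reedy structure has inverse subcategory $\mathcal C^-$, direct subcategory $\mathcal C^+=\mathcal C\cap\mathcal C^+( * )$ and the same degree. (A Reedy category: unique factorization $\alpha=\alpha^+\alpha^-$, degree weakly increasing along $\mathcal C^+$, weakly decreasing along $\mathcal C^-$, equality only for identities.) EZ-Reedy: for $\alpha\colon c\to d$ let $\Gamma(\alpha)=\{\beta\colon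 d\to c\mid\alpha\beta=1_d\}$. A Reedy category is EZ-Reedy if every $\sigma\in\mathcal C^-$ has $\Gamma(\sigma)\ne\emptyset$, and any $\sigma,\sigma'\colon c\to d$ in $\mathcal C^-$ with $\Gamma(\sigma)=\Gamma(\sigma')$ are equal. $\Delta$: category of $[n]=\{0<\dots<n\}$ and order-preserving maps; $\Delta^-$: surjections; $\Delta^+( * )$: multimorphisms $(\alpha_s\colon[m]\to[n_s])_s$ forming a monomorphic family. $\Theta\mathcal C$: objects $[m](c_1,\dots,c_m)$, $m\ge0$, $c_i\in\mathrm{ob}\,\mathcal C$; morphisms $[m](c_1,\dots,c_m)\to[n](d_1,\dots,d_n)$ are $(\alpha,\{f_i\})$ with $\alpha\colon[m]\to[n]$ in $\Delta$ and $f_i=(f_{ij}\colon c_i\to d_j)_{\alpha(i-1)<j\le\alpha(i)}$; composition $(\beta,\{g_j\})(\alpha,\{f_i\})=(\beta\alpha,\{h_i\})$ with $h_{ik}=g_{jk}f_{ij}$. Its Reedy structure: $(\Theta\mathcal C)^-$ consists of $(\alpha,\{f_i\})$ with $\alpha\in\Delta^-$ and $f_i\colon c_i\to d_{\alpha(i)}$ in $\mathcal C^-$ whenever $\alpha(i-1)<\alpha(i)$; $(\Theta\mathcal C)^+$ consists of $(\alpha,\{f_i\})$ with $\alpha$ injective (monomorphism in $\Delta$) and each $f_i=(f_{ij})_{\alpha(i-1)<j\le\alpha(i)}$ in $\mathcal C^+( * )$; $\deg([m](c_1,\dots,c_m))=m+\sum_i\deg(c_i)$. *)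

theory Defs
  imports Main "HOL-Library.Multiset"
begin

text \<open>A (small) category: objects, morphisms, domain, codomain,
  composition (Cmp C g f = g o f) and identities.\<close>

record ('o, 'm) cat =
  Ob  :: "'o set"
  Mor :: "'m set"
  Dom :: "'m \<Rightarrow> 'o"
  Cod :: "'m \<Rightarrow> 'o"
  Cmp :: "'m \<Rightarrow> 'm \<Rightarrow> 'm"
  Idn :: "'o \<Rightarrow> 'm"

definition is_cat :: "('o, 'm) cat \<Rightarrow> bool" where
  "is_cat C \<longleftrightarrow>
     (\<forall>f\<in>Mor C. Dom C f \<in> Ob C \<and> Cod C f \<in> Ob C) \<and>
     (\<forall>c\<in>Ob C. Idn C c \<in> Mor C \<and> Dom C (Idn C c) = c \<and> Cod C (Idn C c) = c) \<and>
     (\<forall>f\<in>Mor C. \<forall>g\<in>Mor C. Cod C f = Dom C g \<longrightarrow>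
        Cmp C g f \<in> Mor C \<and> Dom C (Cmp C g f) = Dom C f \<and> Cod C (Cmp C g f) = Cod C g) \<and>
     (\<forall>f\<in>Mor C. Cmp C f (Idn C (Dom C f)) = f \<and> Cmp C (Idn C (Cod C f)) f = f) \<and>
     (\<forall>f\<in>Mor C. \<forall>g\<in>Mor C. \<forall>h\<in>Mor C. Cod C f = Dom C g \<longrightarrow> Cod C g = Dom C h \<longrightarrow>
        Cmp C h (Cmp C g f) = Cmp C (Cmp C h g) f)"

definition hom :: "('o, 'm) cat \<Rightarrow> 'o \<Rightarrow> 'o \<Rightarrow> 'm set" where
  "hom C c d = {f \<in> Mor C. Dom C f = c \<and> Cod C f = d}"

definition wide_subcat :: "('o, 'm) cat \<Rightarrow> 'm set \<Rightarrow> bool" where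
  "wide_subcat C S \<longleftrightarrow> S \<subseteq> Mor C \<and> (\<forall>c\<in>Ob C. Idn C c \<in> S) \<and>
     (\<forall>f\<in>S. \<forall>g\<in>S. Cod C f = Dom C g \<longrightarrow> Cmp C g f \<in> S)"

record ('o, 'm) reedy_str =
  Rminus :: "'m set"
  Rplus  :: "'m set"
  Rdeg   :: "'o \<Rightarrow> nat"

definition is_reedy :: "('o, 'm) cat \<Rightarrow> ('o, 'm) reedy_str \<Rightarrow> bool" where
  "is_reedy C R \<longleftrightarrow> is_cat C \<and> wide_subcat C (Rminus R) \<and> wide_subcat C (Rplus R) \<and>
     (\<forall>f\<in>Mor C.
        (\<exists>p q. q \<in> Rminus R \<and> p \<in> Rplus R \<and> Cod C q = Dom C p \<and> f = Cmp C p q) \<and>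
        (\<forall>p q p' q'. q \<in> Rminus R \<and> p \<in> Rplus R \<and> Cod C q = Dom C p \<and> f = Cmp C p q \<and>
                     q' \<in> Rminus R \<and> p' \<in> Rplus R \<and> Cod C q' = Dom C p' \<and> f = Cmp C p' q'
                     \<longrightarrow> p = p' \<and> q = q')) \<and>
     (\<forall>f\<in>Rplus R. Rdeg R (Dom C f) \<le> Rdeg R (Cod C f) \<and>
        (Rdeg R (Dom C f) = Rdeg R (Cod C f) \<longrightarrow> f = Idn C (Dom C f))) \<and>
     (\<forall>f\<in>Rminus R. Rdeg R (Cod C f) \<le> Rdeg R (Dom C f) \<and>
        (Rdeg R (Cod C f) = Rdeg R (Dom C f) \<longrightarrow> f = Idn C (Dom C f)))"

definition Gamma :: "('o, 'm) cat \<Rightarrow> 'm \<Rightarrow> 'm set" where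
  "Gamma C a = {b \<in> Mor C. Dom C b = Cod C a \<and> Cod C b = Dom C a \<and> Cmp C a b = Idn C (Cod C a)}"

definition is_ez_reedy :: "('o, 'm) cat \<Rightarrow> ('o, 'm) reedy_str \<Rightarrow> bool" where
  "is_ez_reedy C R \<longleftrightarrow> is_reedy C R \<and>
     (\<forall>s\<in>Rminus R. Gamma C s \<noteq> {}) \<and>
     (\<forall>s\<in>Rminus R. \<forall>s'\<in>Rminus R. Dom C s = Dom C s' \<and> Cod C s = Cod C s' \<and>
        Gamma C s = Gamma C s' \<longrightarrow> s = s')"

text \<open>A multimorphism c -> d_1,...,d_m is represented as the pair (c, [a_1,...,a_m])
  of its source and the list of its components a_s : c -> d_s.\<close>

definition is_multimor :: "('o, 'm) cat \<Rightarrow> 'o \<Rightarrow> 'm list \<Rightarrow> bool" where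
  "is_multimor C c fs \<longleftrightarrow> c \<in> Ob C \<and> (\<forall>f\<in>set fs. f \<in> Mor C \<and> Dom C f = c)"

definition postcomp :: "('o, 'm) cat \<Rightarrow> 'm list \<Rightarrow> 'm list list \<Rightarrow> 'm list" where
  "postcomp C fs gss = concat (map2 (\<lambda>f gs. map (\<lambda>g. Cmp C g f) gs) fs gss)"

definition wide_submulticat :: "('o, 'm) cat \<Rightarrow> ('o \<times> 'm list) set \<Rightarrow> bool" where
  "wide_submulticat C P \<longleftrightarrow>
     (\<forall>(c, fs)\<in>P. is_multimor C c fs) \<and>
     (\<forall>c\<in>Ob C. (c, [Idn C c]) \<in> P) \<and>
     (\<forall>(c, fs)\<in>P. \<forall>gss. length gss = length fs \<and>
         (\<forall>i<length fs. (Cod C (fs ! i), gss ! i) \<in> P) \<longrightarrow> (c, postcomp C fs gss) \<in> P) \<and>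
     (\<forall>(c, fs)\<in>P. \<forall>gs. mset gs = mset fs \<longrightarrow> (c, gs) \<in> P)"

record ('o, 'm) mreedy_str =
  Mminus :: "'m set"
  Mplus  :: "('o \<times> 'm list) set"
  Mdeg   :: "'o \<Rightarrow> nat"

definition is_multi_reedy :: "('o, 'm) cat \<Rightarrow> ('o, 'm) mreedy_str \<Rightarrow> bool" where
  "is_multi_reedy C M \<longleftrightarrow> is_cat C \<and> wide_subcat C (Mminus M) \<and> wide_submulticat C (Mplus M) \<and>
     (\<forall>c fs. is_multimor C c fs \<longrightarrow>
        (\<exists>s gs. s \<in> Mminus M \<and> Dom C s = c \<and> (Cod C s, gs) \<in> Mplus M \<and>
                fs = map (\<lambda>g. Cmp C g s) gs) \<and>
        (\<forall>s gs s' gs'. s \<in> Mminus M \<and> Dom C s = c \<and> (Cod C s, gs) \<in> Mplus M \<and>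
                fs = map (\<lambda>g. Cmp C g s) gs \<and>
                s' \<in> Mminus M \<and> Dom C s' = c \<and> (Cod C s', gs') \<in> Mplus M \<and>
                fs = map (\<lambda>g. Cmp C g s') gs' \<longrightarrow> s = s' \<and> gs = gs')) \<and>
     (\<forall>(c, ds)\<in>Mplus M. Mdeg M c \<le> sum_list (map (\<lambda>d. Mdeg M (Cod C d)) ds)) \<and>
     (\<forall>f. (Dom C f, [f]) \<in> Mplus M \<and> Mdeg M (Dom C f) = Mdeg M (Cod C f) \<longrightarrow> f = Idn C (Dom C f)) \<and>
     (\<forall>f\<in>Mminus M. Mdeg M (Cod C f) \<le> Mdeg M (Dom C f) \<and>
        (Mdeg M (Cod C f) = Mdeg M (Dom C f) \<longrightarrow> f = Idn C (Dom C f)))"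

definition underlying_reedy :: "('o, 'm) cat \<Rightarrow> ('o, 'm) mreedy_str \<Rightarrow> ('o, 'm) reedy_str" where
  "underlying_reedy C M =
     \<lparr>Rminus = Mminus M, Rplus = {f. (Dom C f, [f]) \<in> Mplus M}, Rdeg = Mdeg M\<rparr>"

text \<open>An object [m](c_1,...,c_m) is the list [c_1,...,c_m].
  A morphism (alpha, {f_i}) : [m](cs) -> [n](ds) is represented as (cs, ds, a, F), where
  a = [alpha(0),...,alpha(m)] and F = [f_1,...,f_m] with
  f_i = [f_{i,alpha(i-1)+1}, ..., f_{i,alpha(i)}] (0-based: F!i!k : cs!i -> ds!(a!i + k)).\<close>

type_synonym ('o, 'm) tmor = "'o list \<times> 'o list \<times> nat list \<times> 'm list list"

definition theta_mor :: "('o, 'm) cat \<Rightarrow> ('o, 'm) tmor \<Rightarrow> bool" where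
  "theta_mor C phi = (case phi of (cs, ds, a, F) \<Rightarrow>
     set cs \<subseteq> Ob C \<and> set ds \<subseteq> Ob C \<and>
     length a = Suc (length cs) \<and> sorted a \<and> (\<forall>x\<in>set a. x \<le> length ds) \<and>
     length F = length cs \<and>
     (\<forall>i<length cs. length (F ! i) = a ! Suc i - a ! i \<and>
        (\<forall>k<length (F ! i). F ! i ! k \<in> Mor C \<and> Dom C (F ! i ! k) = cs ! i \<and>
                             Cod C (F ! i ! k) = ds ! (a ! i + k))))"

text \<open>(beta,{g_j}) o (alpha,{f_i}) = (beta alpha, {h_i}), h_{ik} = g_{jk} f_{ij}.\<close>
definition theta_comp :: "('o, 'm) cat \<Rightarrow> ('o, 'm) tmor \<Rightarrow> ('o, 'm) tmor \<Rightarrow> ('o, 'm) tmor" where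
  "theta_comp C psi phi = (case phi of (cs, ds, a, F) \<Rightarrow> case psi of (_, es, b, G) \<Rightarrow>
     (cs, es, map (\<lambda>x. b ! x) a,
      map (\<lambda>i. postcomp C (F ! i) (take (a ! Suc i - a ! i) (drop (a ! i) G))) [0..<length cs]))"

definition theta_id :: "('o, 'm) cat \<Rightarrow> 'o list \<Rightarrow> ('o, 'm) tmor" where
  "theta_id C cs = (cs, cs, [0..<Suc (length cs)], map (\<lambda>c. [Idn C c]) cs)"

definition ThetaCat :: "('o, 'm) cat \<Rightarrow> ('o list, ('o, 'm) tmor) cat" where
  "ThetaCat C = \<lparr>Ob = {cs. set cs \<subseteq> Ob C}, Mor = {phi. theta_mor C phi},
                 Dom = (\<lambda>phi. fst phi), Cod = (\<lambda>phi. fst (snd phi)),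
                 Cmp = theta_comp C, Idn = theta_id C\<rparr>"

definition theta_minus :: "('o, 'm) cat \<Rightarrow> ('o, 'm) mreedy_str \<Rightarrow> ('o, 'm) tmor set" where
  "theta_minus C M = {phi. theta_mor C phi \<and> (case phi of (cs, ds, a, F) \<Rightarrow>
     set a = {0..length ds} \<and>
     (\<forall>i<length cs. a ! i < a ! Suc i \<longrightarrow> F ! i ! 0 \<in> Mminus M))}"

definition theta_plus :: "('o, 'm) cat \<Rightarrow> ('o, 'm) mreedy_str \<Rightarrow> ('o, 'm) tmor set" where
  "theta_plus C M = {phi. theta_mor C phi \<and> (case phi of (cs, ds, a, F) \<Rightarrow>
     sorted_wrt (<) a \<and> (\<forall>i<length cs. (cs ! i, F ! i) \<in> Mplus M))}"

definition theta_deg :: "('o, 'm) mreedy_str \<Rightarrow> 'o list \<Rightarrow> nat" where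
  "theta_deg M cs = length cs + sum_list (map (Mdeg M) cs)"

definition ThetaReedy :: "('o, 'm) cat \<Rightarrow> ('o, 'm) mreedy_str \<Rightarrow> ('o list, ('o, 'm) tmor) reedy_str" where
  "ThetaReedy C M = \<lparr>Rminus = theta_minus C M, Rplus = theta_plus C M, Rdeg = theta_deg M\<rparr>"

end

theory Submission
  imports Defs
begin


lemma postcomp_Cons: "postcomp C (f#fs) (gs#gss) = map (\<lambda>g. Cmp C g f) gs @ postcomp C fs gss"
  by (simp add: postcomp_def)

lemma postcomp_Nil: "postcomp C [] gss = []"
  by (simp add: postcomp_def)

lemma postcomp_nth:
  assumes "length gss = length fs" "length fs < length b" "sorted b"
    "\<forall>j<length fs. length (gss!j) = b!Suc j - b!j"
  shows "length (postcomp C fs gss) = b!length fs - b!0 \<and>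
   (\<forall>j<length fs. \<forall>l<length (gss!j). postcomp C fs gss ! (b!j - b!0 + l) = Cmp C (gss!j!l) (fs!j))"
  using assms
proof (induction fs arbitrary: gss b)
  case Nil
  then show ?case by (simp add: postcomp_Nil)
next
  case (Cons f fs)
  obtain gs gss' where g: "gss = gs # gss'" using Cons.prems(1) by (cases gss) auto
  obtain b0 b' where bb: "b = b0 # b'" using Cons.prems(2) by (cases b) auto
  have sb: "sorted b'" using Cons.prems(3) bb by simp
  have lg: "length gss' = length fs" using Cons.prems(1) g by simp
  have lb: "length fs < length b'" using Cons.prems(2) bb by simp
  have ll: "\<forall>j<length fs. length (gss'!j) = b'!Suc j - b'!j"
  proof (intro allI impI)
    fix j assume "j < length fs"
    then show "length (gss'!j) = b'!Suc j - b'!j" using Cons.prems(4)[rule_format, of "Suc j"] g bb by simp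
  qed
  note IH = Cons.IH[OF lg lb sb ll]
  have len0: "length gs = b'!0 - b0" using Cons.prems(4)[rule_format, of 0] g bb by simp
  have b0le: "b0 \<le> b'!0" using Cons.prems(3) bb lb by (cases b') auto
  have mono: "\<And>j. j < length b' \<Longrightarrow> b'!0 \<le> b'!j" using sb by (simp add: sorted_nth_mono)
  have L: "length (postcomp C (f#fs) gss) = b!length (f#fs) - b!0"
    using IH g bb len0 b0le mono[of "length fs"] lb by (simp add: postcomp_Cons)
  moreover have "\<forall>j<length (f#fs). \<forall>l<length (gss!j). postcomp C (f#fs) gss ! (b!j - b!0 + l) = Cmp C (gss!j!l) ((f#fs)!j)"
  proof (intro allI impI)
    fix j l assume j: "j < length (f#fs)" and l: "l < length (gss!j)"
    show "postcomp C (f#fs) gss ! (b!j - b!0 + l) = Cmp C (gss!j!l) ((f#fs)!j)"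
    proof (cases j)
      case 0
      then show ?thesis using l g bb by (simp add: postcomp_Cons nth_append)
    next
      case (Suc j')
      have j': "j' < length fs" using j Suc by simp
      have "b'!0 \<le> b'!j'" using mono[of j'] j' lb by simp
      then have eq: "b!j - b!0 + l = length gs + (b'!j' - b'!0 + l)" using Suc bb len0 b0le by simp
      show ?thesis using IH j' l Suc g unfolding eq by (simp add: postcomp_Cons nth_append)
    qed
  qed
  ultimately show ?case by blast
qed



lemma theta_mor_unf: "theta_mor C (cs, ds, a, F) \<longleftrightarrow>
     set cs \<subseteq> Ob C \<and> set ds \<subseteq> Ob C \<and>
     length a = Suc (length cs) \<and> sorted a \<and> (\<forall>x\<in>set a. x \<le> length ds) \<and>
     length F = length cs \<and>
     (\<forall>i<length cs. length (F ! i) = a ! Suc i - a ! i \<and>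
        (\<forall>k<length (F ! i). F ! i ! k \<in> Mor C \<and> Dom C (F ! i ! k) = cs ! i \<and>
                             Cod C (F ! i ! k) = ds ! (a ! i + k)))"
  by (simp add: theta_mor_def)

lemma seg_decomp:
  fixes b :: "nat list"
  assumes "sorted b" "p \<le> q" "q < length b" "k < b!q - b!p"
  shows "\<exists>j. p \<le> j \<and> j < q \<and> b!j - b!p \<le> k \<and> k < b!Suc j - b!p"
  using assms
proof (induction q)
  case 0
  then have "p = 0" by simp
  then show ?case using 0 by (metis diff_self_eq_0 not_less_zero)
next
  case (Suc q)
  show ?case
  proof (cases "p \<le> q \<and> k < b!q - b!p")
    case True
    then show ?thesis using Suc by (metis Suc_lessD less_SucI)
  next
    case False
    have "p \<le> q" using False Suc.prems
      by (metis diff_is_0_eq' le_SucE less_nat_zero_code order.refl)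
    then have "b!q - b!p \<le> k" using False by simp
    then show ?thesis using \<open>p \<le> q\<close> Suc.prems by auto
  qed
qed

lemma theta_morD:
  assumes "theta_mor C (cs, ds, a, F)"
  shows "set cs \<subseteq> Ob C" "set ds \<subseteq> Ob C" "length a = Suc (length cs)" "sorted a"
    "\<And>x. x \<le> length cs \<Longrightarrow> a!x \<le> length ds" "length F = length cs"
    "\<And>i. i < length cs \<Longrightarrow> length (F ! i) = a ! Suc i - a ! i"
    "\<And>i k. i < length cs \<Longrightarrow> k < a ! Suc i - a ! i \<Longrightarrow> F ! i ! k \<in> Mor C"
    "\<And>i k. i < length cs \<Longrightarrow> k < a ! Suc i - a ! i \<Longrightarrow> Dom C (F ! i ! k) = cs ! i"
    "\<And>i k. i < length cs \<Longrightarrow> k < a ! Suc i - a ! i \<Longrightarrow> Cod C (F ! i ! k) = ds ! (a ! i + k)"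
  using assms unfolding theta_mor_unf by auto

lemma seg_postcomp:
  assumes phi: "theta_mor C (cs, ds, a, F)" and psi: "theta_mor C (ds, es, b, G)" and i: "i < length cs"
  shows "length (postcomp C (F!i) (take (a!Suc i - a!i) (drop (a!i) G))) = b!(a!Suc i) - b!(a!i)"
    and "a!i \<le> j \<Longrightarrow> j < a!Suc i \<Longrightarrow> l < b!Suc j - b!j \<Longrightarrow>
       postcomp C (F!i) (take (a!Suc i - a!i) (drop (a!i) G)) ! (b!j - b!(a!i) + l) = Cmp C (G!j!l) (F!i!(j - a!i))"
proof -
  note P = theta_morD[OF phi] and Q = theta_morD[OF psi]
  have ai: "a!i \<le> a!Suc i" using P(3,4) i by (simp add: sorted_nth_mono)
  have asi: "a!Suc i \<le> length ds" using P(5) i by simp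
  let ?gss = "take (a!Suc i - a!i) (drop (a!i) G)"
  let ?b = "drop (a!i) b"
  have l1: "length ?gss = length (F!i)" using P(7)[OF i] Q(6) asi by simp
  have l2: "length (F!i) < length ?b" using P(7)[OF i] Q(3) asi ai by simp
  have l3: "sorted ?b" using Q(4) by (simp add: sorted_wrt_drop)
  have l4: "\<forall>j<length (F!i). length (?gss!j) = ?b!Suc j - ?b!j"
  proof (intro allI impI)
    fix j assume "j < length (F!i)"
    then have "a!i + j < length ds" using P(7)[OF i] asi by simp
    then show "length (?gss!j) = ?b!Suc j - ?b!j" using Q(7)[of "a!i+j"] Q(3) Q(6) \<open>j < length (F!i)\<close> P(7)[OF i]
      by (simp add: add.commute)
  qed
  note R = postcomp_nth[OF l1 l2 l3 l4, of C]
  show "length (postcomp C (F!i) ?gss) = b!(a!Suc i) - b!(a!i)"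
    using R P(7)[OF i] ai asi Q(3) by simp
  assume j1: "a!i \<le> j" and j2: "j < a!Suc i" and l: "l < b!Suc j - b!j"
  have jj: "j - a!i < length (F!i)" using j1 j2 P(7)[OF i] by simp
  have ll: "l < length (?gss ! (j - a!i))" using l j1 j2 asi Q(6) Q(7)[of j] by simp
  have "postcomp C (F!i) ?gss ! (?b!(j - a!i) - ?b!0 + l) = Cmp C (?gss!(j - a!i)!l) (F!i!(j - a!i))"
    using R jj ll by blast
  moreover have "?b!(j - a!i) = b!j" "?b!0 = b!(a!i)" using j1 j2 asi Q(3) by auto
  moreover have "?gss!(j - a!i) = G!j" using j1 j2 asi Q(6) by simp
  ultimately show "postcomp C (F!i) ?gss ! (b!j - b!(a!i) + l) = Cmp C (G!j!l) (F!i!(j - a!i))" by simp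
qed



lemma catD:
  assumes "is_cat C"
  shows "\<And>f. f \<in> Mor C \<Longrightarrow> Dom C f \<in> Ob C" "\<And>f. f \<in> Mor C \<Longrightarrow> Cod C f \<in> Ob C"
    "\<And>c. c \<in> Ob C \<Longrightarrow> Idn C c \<in> Mor C" "\<And>c. c \<in> Ob C \<Longrightarrow> Dom C (Idn C c) = c"
    "\<And>c. c \<in> Ob C \<Longrightarrow> Cod C (Idn C c) = c"
    "\<And>f g. f \<in> Mor C \<Longrightarrow> g \<in> Mor C \<Longrightarrow> Cod C f = Dom C g \<Longrightarrow> Cmp C g f \<in> Mor C"
    "\<And>f g. f \<in> Mor C \<Longrightarrow> g \<in> Mor C \<Longrightarrow> Cod C f = Dom C g \<Longrightarrow> Dom C (Cmp C g f) = Dom C f"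
    "\<And>f g. f \<in> Mor C \<Longrightarrow> g \<in> Mor C \<Longrightarrow> Cod C f = Dom C g \<Longrightarrow> Cod C (Cmp C g f) = Cod C g"
    "\<And>f. f \<in> Mor C \<Longrightarrow> Cmp C f (Idn C (Dom C f)) = f"
    "\<And>f. f \<in> Mor C \<Longrightarrow> Cmp C (Idn C (Cod C f)) f = f"
    "\<And>f g h. f \<in> Mor C \<Longrightarrow> g \<in> Mor C \<Longrightarrow> h \<in> Mor C \<Longrightarrow> Cod C f = Dom C g \<Longrightarrow> Cod C g = Dom C h \<Longrightarrow>
        Cmp C h (Cmp C g f) = Cmp C (Cmp C h g) f"
  using assms unfolding is_cat_def by blast+

definition tH :: "('o,'m) cat \<Rightarrow> nat list \<Rightarrow> 'm list list \<Rightarrow> 'm list list \<Rightarrow> nat \<Rightarrow> 'm list" where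
  "tH C a F G i = postcomp C (F!i) (take (a!Suc i - a!i) (drop (a!i) G))"

lemma theta_comp_eq: "theta_comp C (ds', es, b, G) (cs, ds, a, F) =
   (cs, es, map (\<lambda>x. b!x) a, map (tH C a F G) [0..<length cs])"
  by (simp add: theta_comp_def tH_def)

lemma comp_entry:
  assumes phi: "theta_mor C (cs, ds, a, F)" and psi: "theta_mor C (ds, es, b, G)" and i: "i < length cs"
    and k: "k < b!(a!Suc i) - b!(a!i)"
  shows "\<exists>j l. a!i \<le> j \<and> j < a!Suc i \<and> j < length ds \<and> l < b!Suc j - b!j \<and> k = b!j - b!(a!i) + l
     \<and> b!(a!i) + k = b!j + l \<and> tH C a F G i ! k = Cmp C (G!j!l) (F!i!(j - a!i))"
proof -
  note P = theta_morD[OF phi] and Q = theta_morD[OF psi]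
  have ai: "a!i \<le> a!Suc i" using P(3,4) i by (simp add: sorted_nth_mono)
  have asi: "a!Suc i \<le> length ds" using P(5) i by simp
  obtain j where j: "a!i \<le> j" "j < a!Suc i" "b!j - b!(a!i) \<le> k" "k < b!Suc j - b!(a!i)"
    using seg_decomp[OF Q(4) ai, of k] k asi Q(3) by auto
  have m1: "b!(a!i) \<le> b!j" "b!j \<le> b!Suc j" using Q(3,4) j asi by (auto simp: sorted_nth_mono)
  define l where "l = k - (b!j - b!(a!i))"
  have l: "l < b!Suc j - b!j" "k = b!j - b!(a!i) + l" "b!(a!i) + k = b!j + l" using j m1 unfolding l_def by auto
  show ?thesis using seg_postcomp(2)[OF phi psi i j(1,2) l(1)] l j asi unfolding tH_def
    by (intro exI[of _ j] exI[of _ l]) auto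
qed

lemma tH_length:
  assumes phi: "theta_mor C (cs, ds, a, F)" and psi: "theta_mor C (ds, es, b, G)" and i: "i < length cs"
  shows "length (tH C a F G i) = b!(a!Suc i) - b!(a!i)"
  using seg_postcomp(1)[OF phi psi i] unfolding tH_def .

lemma comp_mor:
  assumes cat: "is_cat C" and phi: "theta_mor C (cs, ds, a, F)" and psi: "theta_mor C (ds, es, b, G)"
  shows "theta_mor C (theta_comp C (ds, es, b, G) (cs, ds, a, F))"
proof -
  note P = theta_morD[OF phi] and Q = theta_morD[OF psi] and K = catD[OF cat]
  have s: "sorted (map (\<lambda>x. b!x) a)"
    unfolding sorted_iff_nth_mono
  proof (intro allI impI)
    fix i j assume ij: "i \<le> j" "j < length (map (\<lambda>x. b!x) a)"
    then have "a!i \<le> a!j" "a!j \<le> length ds" using P(3,4,5) by (auto simp: sorted_nth_mono)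
    then show "map (\<lambda>x. b!x) a ! i \<le> map (\<lambda>x. b!x) a ! j" using ij Q(3,4) by (simp add: sorted_nth_mono)
  qed
  have e: "\<forall>x\<in>set (map (\<lambda>x. b!x) a). x \<le> length es"
  proof
    fix y assume "y \<in> set (map (\<lambda>x. b!x) a)"
    then obtain t where t: "t < length a" "y = b!(a!t)" by (auto simp: in_set_conv_nth)
    then have "a!t \<le> length ds" using P(3,5) by simp
    then show "y \<le> length es" using t Q(3,5) by simp
  qed
  have ent: "\<forall>i<length cs. length (tH C a F G i) = b!(a!Suc i) - b!(a!i) \<and>
        (\<forall>k<length (tH C a F G i). tH C a F G i ! k \<in> Mor C \<and> Dom C (tH C a F G i ! k) = cs ! i \<and>
                             Cod C (tH C a F G i ! k) = es ! (b!(a!i) + k))"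
  proof (intro allI impI conjI)
    fix i assume i: "i < length cs"
    show L: "length (tH C a F G i) = b!(a!Suc i) - b!(a!i)" by (rule tH_length[OF phi psi i])
    fix k assume "k < length (tH C a F G i)"
    then obtain j l where jl: "a!i \<le> j" "j < a!Suc i" "j < length ds" "l < b!Suc j - b!j" "k = b!j - b!(a!i) + l"
      "b!(a!i) + k = b!j + l" "tH C a F G i ! k = Cmp C (G!j!l) (F!i!(j - a!i))"
      using comp_entry[OF phi psi i] L by metis
    have jk: "j - a!i < a!Suc i - a!i" using jl by simp
    have f: "F!i!(j - a!i) \<in> Mor C" "Dom C (F!i!(j - a!i)) = cs!i" "Cod C (F!i!(j - a!i)) = ds!j"
      using P(8,9,10)[OF i jk] jl by auto
    have g: "G!j!l \<in> Mor C" "Dom C (G!j!l) = ds!j" "Cod C (G!j!l) = es!(b!j + l)"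
      using Q(8,9,10)[OF jl(3) jl(4)] by auto
    show "tH C a F G i ! k \<in> Mor C" using jl(7) K(6) f g by simp
    show "Dom C (tH C a F G i ! k) = cs ! i" using jl(7) K(7) f g by simp
    show "Cod C (tH C a F G i ! k) = es ! (b!(a!i) + k)" using jl(7,6) K(8) f g by simp
  qed
  show ?thesis unfolding theta_comp_eq theta_mor_unf
    using P(1,3,6) Q(2) s e ent by simp
qed



lemma tH_nth:
  assumes phi: "theta_mor C (cs, ds, a, F)" and psi: "theta_mor C (ds, es, b, G)" and i: "i < length cs"
  shows "a!i \<le> j \<Longrightarrow> j < a!Suc i \<Longrightarrow> l < b!Suc j - b!j \<Longrightarrow>
       tH C a F G i ! (b!j - b!(a!i) + l) = Cmp C (G!j!l) (F!i!(j - a!i))"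
  using seg_postcomp(2)[OF phi psi i] unfolding tH_def by blast

lemma theta_id_mor:
  assumes cat: "is_cat C" and cs: "set cs \<subseteq> Ob C"
  shows "theta_mor C (theta_id C cs)"
proof -
  have "\<forall>i<length cs. cs!i \<in> Ob C" using cs by auto
  then show ?thesis
    using cs catD(3,4,5)[OF cat] unfolding theta_id_def theta_mor_unf
    by (auto simp del: upt_Suc simp: nth_Cons')
qed

lemma theta_id_left:
  assumes cat: "is_cat C" and phi: "theta_mor C (cs, ds, a, F)"
  shows "theta_comp C (cs, ds, a, F) (theta_id C cs) = (cs, ds, a, F)"
proof -
  note P = theta_morD[OF phi] and K = catD[OF cat]
  have 1: "map (\<lambda>x. a!x) [0..<Suc (length cs)] = a" using P(3)
    by (metis map_nth)
  have 2: "map (tH C [0..<Suc (length cs)] (map (\<lambda>c. [Idn C c]) cs) F) [0..<length cs] = F"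
  proof (rule nth_equalityI)
    show "length (map (tH C [0..<Suc (length cs)] (map (\<lambda>c. [Idn C c]) cs) F) [0..<length cs]) = length F"
      using P(6) by simp
    fix i assume "i < length (map (tH C [0..<Suc (length cs)] (map (\<lambda>c. [Idn C c]) cs) F) [0..<length cs])"
    then have i: "i < length cs" by simp
    have t: "take (Suc i - i) (drop i F) = [F!i]" using i P(6)
      by (simp flip: Cons_nth_drop_Suc)
    have "map (\<lambda>g. Cmp C g (Idn C (cs!i))) (F!i) = F!i"
    proof (rule nth_equalityI)
      fix k assume "k < length (map (\<lambda>g. Cmp C g (Idn C (cs!i))) (F!i))"
      then have k: "k < a ! Suc i - a ! i" using P(7)[OF i] by simp
      show "map (\<lambda>g. Cmp C g (Idn C (cs!i))) (F!i) ! k = F!i!k"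
        using K(9)[OF P(8)[OF i k]] P(9)[OF i k] k P(7)[OF i] by simp
    qed simp
    then show "map (tH C [0..<Suc (length cs)] (map (\<lambda>c. [Idn C c]) cs) F) [0..<length cs] ! i = F ! i"
      using i t by (simp add: tH_def postcomp_Cons postcomp_Nil nth_append del: upt_Suc)
  qed
  show ?thesis unfolding theta_id_def theta_comp_eq using 1 2 by simp
qed

lemma theta_id_right:
  assumes cat: "is_cat C" and phi: "theta_mor C (cs, ds, a, F)"
  shows "theta_comp C (theta_id C ds) (cs, ds, a, F) = (cs, ds, a, F)"
proof -
  note P = theta_morD[OF phi] and K = catD[OF cat]
  have psi: "theta_mor C (ds, ds, [0..<Suc (length ds)], map (\<lambda>c. [Idn C c]) ds)"
    using theta_id_mor[OF cat P(2)] unfolding theta_id_def .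
  have 1: "map (\<lambda>x. [0..<Suc (length ds)]!x) a = a"
  proof (rule nth_equalityI)
    fix i assume "i < length (map (\<lambda>x. [0..<Suc (length ds)]!x) a)"
    then have "a!i \<le> length ds" using P(3,5) by simp
    then show "map (\<lambda>x. [0..<Suc (length ds)]!x) a ! i = a!i" using \<open>i < _\<close>
      by (simp del: upt_Suc)
  qed simp
  have 2: "map (tH C a F (map (\<lambda>c. [Idn C c]) ds)) [0..<length cs] = F"
  proof (rule nth_equalityI)
    show "length (map (tH C a F (map (\<lambda>c. [Idn C c]) ds)) [0..<length cs]) = length F"
      using P(6) by simp
    fix i assume "i < length (map (tH C a F (map (\<lambda>c. [Idn C c]) ds)) [0..<length cs])"
    then have i: "i < length cs" by simp
    have ai: "a!i \<le> a!Suc i" "a!Suc i \<le> length ds" using P(3,4,5) i by (auto simp: sorted_nth_mono)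
    have L: "length (tH C a F (map (\<lambda>c. [Idn C c]) ds) i) = length (F!i)"
      using tH_length[OF phi psi i] P(7)[OF i] ai by (simp del: upt_Suc)
    have "tH C a F (map (\<lambda>c. [Idn C c]) ds) i = F!i"
    proof (rule nth_equalityI[OF L])
      fix k assume "k < length (tH C a F (map (\<lambda>c. [Idn C c]) ds) i)"
      then have k: "k < a ! Suc i - a ! i" using L P(7)[OF i] by simp
      have j: "a!i \<le> a!i + k" "a!i + k < a!Suc i" "0 < [0..<Suc (length ds)]!Suc (a!i + k) - [0..<Suc (length ds)]!(a!i + k)"
        using k ai by (auto simp del: upt_Suc)
      have "tH C a F (map (\<lambda>c. [Idn C c]) ds) i ! ([0..<Suc (length ds)]!(a!i+k) - [0..<Suc (length ds)]!(a!i) + 0)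
          = Cmp C (map (\<lambda>c. [Idn C c]) ds ! (a!i+k) ! 0) (F!i!(a!i + k - a!i))"
        by (rule tH_nth[OF phi psi i j])
      moreover have "[0..<Suc (length ds)]!(a!i+k) - [0..<Suc (length ds)]!(a!i) + 0 = k"
        using k ai by (simp del: upt_Suc)
      ultimately show "tH C a F (map (\<lambda>c. [Idn C c]) ds) i ! k = F!i!k"
        using K(10)[OF P(8)[OF i k]] P(10)[OF i k] k ai by simp
    qed
    then show "map (tH C a F (map (\<lambda>c. [Idn C c]) ds)) [0..<length cs] ! i = F ! i" using i by simp
  qed
  show ?thesis unfolding theta_id_def theta_comp_eq using 1 2 by simp
qed



lemma theta_assoc:
  assumes cat: "is_cat C" and phi: "theta_mor C (cs, ds, a, F)" and psi: "theta_mor C (ds, es, b, G)"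
    and chi: "theta_mor C (es, fs, c, K)"
  shows "theta_comp C (es, fs, c, K) (theta_comp C (ds, es, b, G) (cs, ds, a, F)) =
         theta_comp C (theta_comp C (es, fs, c, K) (ds, es, b, G)) (cs, ds, a, F)"
proof -
  note P = theta_morD[OF phi] and Q = theta_morD[OF psi] and R = theta_morD[OF chi] and Ct = catD[OF cat]
  define ba where "ba = map (\<lambda>x. b!x) a"
  define cb where "cb = map (\<lambda>x. c!x) b"
  define H1 where "H1 = map (tH C a F G) [0..<length cs]"
  define H2 where "H2 = map (tH C b G K) [0..<length ds]"
  have m1: "theta_mor C (cs, es, ba, H1)" using comp_mor[OF cat phi psi]
    unfolding theta_comp_eq ba_def H1_def .
  have m2: "theta_mor C (ds, fs, cb, H2)" using comp_mor[OF cat psi chi]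
    unfolding theta_comp_eq cb_def H2_def .
  have idx: "map (\<lambda>x. c!x) ba = map (\<lambda>x. cb!x) a"
  proof (rule nth_equalityI)
    fix i assume "i < length (map (\<lambda>x. c!x) ba)"
    then have "i \<le> length cs" "a!i \<le> length ds" using P(3,5) unfolding ba_def by auto
    then show "map (\<lambda>x. c!x) ba ! i = map (\<lambda>x. cb!x) a ! i" using Q(3) P(3) unfolding ba_def cb_def by auto
  qed (simp add: ba_def)
  have comps: "map (tH C ba H1 K) [0..<length cs] = map (tH C a F H2) [0..<length cs]"
  proof (rule nth_equalityI)
    fix i assume "i < length (map (tH C ba H1 K) [0..<length cs])"
    then have i: "i < length cs" by simp
    have ai: "a!i \<le> a!Suc i" "a!Suc i \<le> length ds" using P(3,4,5) i by (auto simp: sorted_nth_mono)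
    have baeq: "ba!i = b!(a!i)" "ba!Suc i = b!(a!Suc i)" using i P(3) unfolding ba_def by auto
    have cbeq: "\<And>x. x \<le> length ds \<Longrightarrow> cb!x = c!(b!x)" unfolding cb_def using Q(3) by auto
    have L1: "length (tH C ba H1 K i) = c!(b!(a!Suc i)) - c!(b!(a!i))"
      using tH_length[OF m1 chi i] baeq by simp
    have L2: "length (tH C a F H2 i) = c!(b!(a!Suc i)) - c!(b!(a!i))"
      using tH_length[OF phi m2 i] cbeq ai by simp
    show "map (tH C ba H1 K) [0..<length cs] ! i = map (tH C a F H2) [0..<length cs] ! i"
      using i apply simp
    proof (rule nth_equalityI)
      show "length (tH C ba H1 K i) = length (tH C a F H2 i)" using L1 L2 by simp
      fix k assume "k < length (tH C ba H1 K i)"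
      then have k: "k < c!(ba!Suc i) - c!(ba!i)" using L1 baeq by simp
      obtain j' l where A: "ba!i \<le> j'" "j' < ba!Suc i" "j' < length es" "l < c!Suc j' - c!j'"
         "k = c!j' - c!(ba!i) + l" "c!(ba!i) + k = c!j' + l"
         "tH C ba H1 K i ! k = Cmp C (K!j'!l) (H1!i!(j' - ba!i))"
        using comp_entry[OF m1 chi i k] by blast
      have k2: "j' - ba!i < b!(a!Suc i) - b!(a!i)" using A baeq by simp
      have H1i: "H1!i = tH C a F G i" unfolding H1_def using i by simp
      obtain j l' where B: "a!i \<le> j" "j < a!Suc i" "j < length ds" "l' < b!Suc j - b!j"
         "j' - ba!i = b!j - b!(a!i) + l'" "b!(a!i) + (j' - ba!i) = b!j + l'"
         "tH C a F G i ! (j' - ba!i) = Cmp C (G!j!l') (F!i!(j - a!i))"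
        using comp_entry[OF phi psi i k2] by blast
      have jj': "j' = b!j + l'" using B(6) A(1) baeq by simp
      have sj: "Suc j \<le> length ds" using B by simp
      have m3: "c!j' \<le> c!Suc j'" "c!(b!j) \<le> c!j'" "c!Suc j' \<le> c!(b!Suc j)"
        "c!(b!(a!i)) \<le> c!(b!j)"
      proof -
        have "b!j \<le> length es" "b!Suc j \<le> length es" "Suc j' \<le> b!Suc j" "b!(a!i) \<le> b!j"
          using Q(3,4,5) B sj jj' by (auto simp: sorted_nth_mono)
        then show "c!j' \<le> c!Suc j'" "c!(b!j) \<le> c!j'" "c!Suc j' \<le> c!(b!Suc j)" "c!(b!(a!i)) \<le> c!(b!j)"
          using R(3,4) jj' A(3) by (auto simp: sorted_nth_mono)
      qed
      define l'' where "l'' = c!j' - c!(b!j) + l"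
      have l''1: "l'' < cb!Suc j - cb!j" unfolding l''_def using cbeq[of j] cbeq[OF sj] m3 A(4) sj by simp
      have R1: "tH C a F H2 i ! (cb!j - cb!(a!i) + l'') = Cmp C (H2!j!l'') (F!i!(j - a!i))"
        by (rule tH_nth[OF phi m2 i B(1,2) l''1])
      have idxk: "cb!j - cb!(a!i) + l'' = k" unfolding l''_def using cbeq[of j] cbeq[of "a!i"] ai B(3) m3 A(5) baeq
        by simp
      have jl1: "b!j \<le> j'" "j' < b!Suc j" using jj' B(4) by auto
      have R2: "tH C b G K j ! (c!j' - c!(b!j) + l) = Cmp C (K!j'!l) (G!j!(j' - b!j))"
        by (rule tH_nth[OF psi chi B(3) jl1 A(4)])
      have H2j: "H2!j = tH C b G K j" unfolding H2_def using B(3) by simp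
      have fF: "F!i!(j - a!i) \<in> Mor C" "Cod C (F!i!(j - a!i)) = ds!j"
        using P(8,10)[OF i, of "j - a!i"] B by auto
      have gG: "G!j!l' \<in> Mor C" "Dom C (G!j!l') = ds!j" "Cod C (G!j!l') = es!j'"
        using Q(8,9,10)[OF B(3) B(4)] jj' by auto
      have kK: "K!j'!l \<in> Mor C" "Dom C (K!j'!l) = es!j'"
        using R(8,9)[OF A(3,4)] by auto
      have "tH C ba H1 K i ! k = Cmp C (K!j'!l) (Cmp C (G!j!l') (F!i!(j - a!i)))"
        using A(7) H1i B(7) by simp
      also have "\<dots> = Cmp C (Cmp C (K!j'!l) (G!j!l')) (F!i!(j - a!i))"
        using Ct(11)[OF fF(1) gG(1) kK(1)] fF gG kK by simp
      also have "\<dots> = tH C a F H2 i ! k"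
        using R1 R2 H2j idxk jj' unfolding l''_def by simp
      finally show "tH C ba H1 K i ! k = tH C a F H2 i ! k" .
    qed
  qed simp
  show ?thesis
    unfolding theta_comp_eq ba_def[symmetric] H1_def[symmetric] cb_def[symmetric] H2_def[symmetric]
    using idx comps by simp
qed



lemma theta_is_cat:
  assumes cat: "is_cat C"
  shows "is_cat (ThetaCat C)"
proof -
  have ob: "\<And>f. theta_mor C f \<Longrightarrow> set (fst f) \<subseteq> Ob C \<and> set (fst (snd f)) \<subseteq> Ob C"
    by (auto simp: theta_mor_def split: prod.splits)
  have idn: "\<And>c. set c \<subseteq> Ob C \<Longrightarrow> theta_mor C (theta_id C c) \<and> fst (theta_id C c) = c \<and> fst (snd (theta_id C c)) = c"
    using theta_id_mor[OF cat] by (simp add: theta_id_def)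
  have cmp: "\<And>f g. theta_mor C f \<Longrightarrow> theta_mor C g \<Longrightarrow> fst (snd f) = fst g \<Longrightarrow>
      theta_mor C (theta_comp C g f) \<and> fst (theta_comp C g f) = fst f \<and> fst (snd (theta_comp C g f)) = fst (snd g)"
  proof -
    fix f g assume f: "theta_mor C f" and g: "theta_mor C g" and fg: "fst (snd f) = fst g"
    obtain cs ds a F where fe: "f = (cs, ds, a, F)" by (cases f) auto
    obtain ds' es b G where ge: "g = (ds', es, b, G)" by (cases g) auto
    have "ds' = ds" using fg fe ge by simp
    then show "theta_mor C (theta_comp C g f) \<and> fst (theta_comp C g f) = fst f \<and> fst (snd (theta_comp C g f)) = fst (snd g)"
      using comp_mor[OF cat, of cs ds a F es b G] f g fe ge by (simp add: theta_comp_eq)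
  qed
  have idl: "\<And>f. theta_mor C f \<Longrightarrow> theta_comp C f (theta_id C (fst f)) = f \<and> theta_comp C (theta_id C (fst (snd f))) f = f"
  proof -
    fix f assume f: "theta_mor C f"
    obtain cs ds a F where fe: "f = (cs, ds, a, F)" by (cases f) auto
    show "theta_comp C f (theta_id C (fst f)) = f \<and> theta_comp C (theta_id C (fst (snd f))) f = f"
      using theta_id_left[OF cat] theta_id_right[OF cat] f fe by simp
  qed
  have asc: "\<And>f g h. theta_mor C f \<Longrightarrow> theta_mor C g \<Longrightarrow> theta_mor C h \<Longrightarrow> fst (snd f) = fst g \<Longrightarrow>
      fst (snd g) = fst h \<Longrightarrow> theta_comp C h (theta_comp C g f) = theta_comp C (theta_comp C h g) f"
  proof -
    fix f g h assume f: "theta_mor C f" and g: "theta_mor C g" and h: "theta_mor C h"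
      and fg: "fst (snd f) = fst g" and gh: "fst (snd g) = fst h"
    obtain cs ds a F where fe: "f = (cs, ds, a, F)" by (cases f) auto
    obtain ds' es b G where ge: "g = (ds', es, b, G)" by (cases g) auto
    obtain es' fs c K where he: "h = (es', fs, c, K)" by (cases h) auto
    show "theta_comp C h (theta_comp C g f) = theta_comp C (theta_comp C h g) f"
      using theta_assoc[OF cat, of cs ds a F es b G fs c K] f g h fg gh fe ge he by simp
  qed
  show ?thesis unfolding is_cat_def ThetaCat_def
    using ob idn cmp idl asc by simp
qed



lemma surj_first:
  fixes a :: "nat list"
  assumes "sorted a" "set a = {0..n}" shows "a!0 = 0"
proof -
  have "0 \<in> set a" using assms by simp
  then obtain t where t: "t < length a" "a!t = 0" by (auto simp: in_set_conv_nth)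
  then show ?thesis using assms(1) sorted_nth_mono[OF assms(1), of 0 t] by simp
qed

lemma surj_last:
  fixes a :: "nat list"
  assumes "sorted a" "set a = {0..n}" "length a = Suc m" shows "a!m = n"
proof -
  have "n \<in> set a" using assms by simp
  then obtain t where t: "t < length a" "a!t = n" by (auto simp: in_set_conv_nth)
  moreover have "a!m \<le> n" using nth_mem[of m a] assms by auto
  ultimately show ?thesis using assms sorted_nth_mono[OF assms(1), of t m] by force
qed

lemma surj_step:
  fixes a :: "nat list"
  assumes "sorted a" "set a = {0..n}" "Suc i < length a" shows "a!Suc i \<le> Suc (a!i)"
proof (rule ccontr)
  assume c: "\<not> a!Suc i \<le> Suc (a!i)"
  have "a!Suc i \<le> n" using nth_mem[of "Suc i" a] assms by auto
  then have "Suc (a!i) \<in> set a" using assms c by auto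
  then obtain t where t: "t < length a" "a!t = Suc (a!i)" by (auto simp: in_set_conv_nth)
  show False
  proof (cases "t \<le> i")
    case True
    then show ?thesis using sorted_nth_mono[OF assms(1) True] t assms(3) by simp
  next
    case False
    then show ?thesis using sorted_nth_mono[OF assms(1), of "Suc i" t] t c by simp
  qed
qed

lemma mreedyD:
  assumes "is_multi_reedy C M"
  shows "is_cat C" "wide_subcat C (Mminus M)" "wide_submulticat C (Mplus M)"
  using assms unfolding is_multi_reedy_def by auto

lemma wsubD:
  assumes "wide_subcat C S"
  shows "\<And>f. f \<in> S \<Longrightarrow> f \<in> Mor C" "\<And>c. c \<in> Ob C \<Longrightarrow> Idn C c \<in> S"
    "\<And>f g. f \<in> S \<Longrightarrow> g \<in> S \<Longrightarrow> Cod C f = Dom C g \<Longrightarrow> Cmp C g f \<in> S"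
  using assms unfolding wide_subcat_def by auto

lemma wsubmD:
  assumes "wide_submulticat C P"
  shows "\<And>c fs. (c, fs) \<in> P \<Longrightarrow> is_multimor C c fs" "\<And>c. c \<in> Ob C \<Longrightarrow> (c, [Idn C c]) \<in> P"
    "\<And>c fs gss. (c, fs) \<in> P \<Longrightarrow> length gss = length fs \<Longrightarrow>
         (\<forall>i<length fs. (Cod C (fs ! i), gss ! i) \<in> P) \<Longrightarrow> (c, postcomp C fs gss) \<in> P"
    "\<And>c fs gs. (c, fs) \<in> P \<Longrightarrow> mset gs = mset fs \<Longrightarrow> (c, gs) \<in> P"
  using assms unfolding wide_submulticat_def by auto

lemma theta_minus_unf: "(cs, ds, a, F) \<in> theta_minus C M \<longleftrightarrow> theta_mor C (cs, ds, a, F) \<and>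
     set a = {0..length ds} \<and> (\<forall>i<length cs. a ! i < a ! Suc i \<longrightarrow> F ! i ! 0 \<in> Mminus M)"
  by (simp add: theta_minus_def)

lemma theta_plus_unf: "(cs, ds, a, F) \<in> theta_plus C M \<longleftrightarrow> theta_mor C (cs, ds, a, F) \<and>
     sorted_wrt (<) a \<and> (\<forall>i<length cs. (cs ! i, F ! i) \<in> Mplus M)"
  by (simp add: theta_plus_def)

lemma minus_wide:
  assumes MR: "is_multi_reedy C M"
  shows "wide_subcat (ThetaCat C) (theta_minus C M)"
proof -
  note cat = mreedyD(1)[OF MR] and W = wsubD[OF mreedyD(2)[OF MR]]
  have 1: "theta_minus C M \<subseteq> Mor (ThetaCat C)" by (auto simp: theta_minus_def ThetaCat_def)
  have 2: "\<forall>c\<in>Ob (ThetaCat C). Idn (ThetaCat C) c \<in> theta_minus C M"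
  proof
    fix cs assume "cs \<in> Ob (ThetaCat C)"
    then have cs: "set cs \<subseteq> Ob C" by (simp add: ThetaCat_def)
    have "theta_mor C (theta_id C cs)" by (rule theta_id_mor[OF cat cs])
    moreover have "\<forall>i<length cs. Idn C (cs!i) \<in> Mminus M" using cs W(2) nth_mem by (metis subset_code(1))
    ultimately show "Idn (ThetaCat C) cs \<in> theta_minus C M"
      by (simp add: ThetaCat_def theta_id_def theta_minus_unf atLeast0AtMost atLeast0LessThan
          lessThan_Suc_atMost del: upt_Suc)
  qed
  have 3: "\<forall>f\<in>theta_minus C M. \<forall>g\<in>theta_minus C M. Cod (ThetaCat C) f = Dom (ThetaCat C) g \<longrightarrow>
          Cmp (ThetaCat C) g f \<in> theta_minus C M"
  proof (intro ballI impI)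
    fix f g assume f: "f \<in> theta_minus C M" and g: "g \<in> theta_minus C M"
      and fg: "Cod (ThetaCat C) f = Dom (ThetaCat C) g"
    obtain cs ds a F where fe: "f = (cs, ds, a, F)" by (cases f) auto
    obtain ds' es b G where ge: "g = (ds', es, b, G)" by (cases g) auto
    have dd: "ds' = ds" using fg fe ge by (simp add: ThetaCat_def)
    have phi: "theta_mor C (cs, ds, a, F)" and sa: "set a = {0..length ds}"
      and fm: "\<forall>i<length cs. a ! i < a ! Suc i \<longrightarrow> F ! i ! 0 \<in> Mminus M"
      using f fe by (auto simp: theta_minus_unf)
    have psi: "theta_mor C (ds, es, b, G)" and sb: "set b = {0..length es}"
      and gm: "\<forall>j<length ds. b ! j < b ! Suc j \<longrightarrow> G ! j ! 0 \<in> Mminus M"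
      using g ge dd by (auto simp: theta_minus_unf)
    note P = theta_morD[OF phi] and Q = theta_morD[OF psi] and Ct = catD[OF cat]
    have s1: "set (map (\<lambda>x. b!x) a) = {0..length es}"
    proof -
      have "set (map (\<lambda>x. b!x) a) = (\<lambda>x. b!x) ` {0..length ds}" using sa by simp
      also have "\<dots> = set b" using Q(3) by (auto simp: in_set_conv_nth image_iff less_Suc_eq_le) (metis atLeastAtMost_iff le0)
      finally show ?thesis using sb by simp
    qed
    have s2: "\<forall>i<length cs. (map (\<lambda>x. b!x) a) ! i < (map (\<lambda>x. b!x) a) ! Suc i \<longrightarrow>
        map (tH C a F G) [0..<length cs] ! i ! 0 \<in> Mminus M"
    proof (intro allI impI)
      fix i assume i: "i < length cs" and jmp: "map (\<lambda>x. b!x) a ! i < map (\<lambda>x. b!x) a ! Suc i"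
      then have jb: "b!(a!i) < b!(a!Suc i)" using P(3) by simp
      have "a!i \<le> a!Suc i" using P(3,4) i by (simp add: sorted_nth_mono)
      then have ja: "a!i < a!Suc i" using jb by (metis le_neq_implies_less less_irrefl)
      have st: "a!Suc i = Suc (a!i)" using surj_step[OF P(4) sa, of i] ja P(3) i by simp
      have k0: "0 < b!(a!Suc i) - b!(a!i)" using jb by simp
      obtain j l where A: "a!i \<le> j" "j < a!Suc i" "j < length ds" "l < b!Suc j - b!j" "0 = b!j - b!(a!i) + l"
        "tH C a F G i ! 0 = Cmp C (G!j!l) (F!i!(j - a!i))"
        using comp_entry[OF phi psi i k0] by blast
      have jj: "j = a!i" "l = 0" using A st by auto
      have f0: "F!i!0 \<in> Mminus M" "Cod C (F!i!0) = ds!(a!i)" using fm i ja P(10)[OF i, of 0] by auto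
      have g0: "G!(a!i)!0 \<in> Mminus M" "Dom C (G!(a!i)!0) = ds!(a!i)"
        using gm A(3,4) jj Q(9)[of "a!i" 0] by auto
      show "map (tH C a F G) [0..<length cs] ! i ! 0 \<in> Mminus M"
        using W(3)[OF f0(1) g0(1)] f0 g0 A(6) jj i by simp
    qed
    show "Cmp (ThetaCat C) g f \<in> theta_minus C M"
      using comp_mor[OF cat phi psi] s1 s2 fe ge dd
      by (simp add: ThetaCat_def theta_comp_eq theta_minus_unf)
  qed
  show ?thesis unfolding wide_subcat_def using 1 2 3 by blast
qed

lemma plus_wide:
  assumes MR: "is_multi_reedy C M"
  shows "wide_subcat (ThetaCat C) (theta_plus C M)"
proof -
  note cat = mreedyD(1)[OF MR] and W = wsubmD[OF mreedyD(3)[OF MR]]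
  have 1: "theta_plus C M \<subseteq> Mor (ThetaCat C)" by (auto simp: theta_plus_def ThetaCat_def)
  have 2: "\<forall>c\<in>Ob (ThetaCat C). Idn (ThetaCat C) c \<in> theta_plus C M"
  proof
    fix cs assume "cs \<in> Ob (ThetaCat C)"
    then have cs: "set cs \<subseteq> Ob C" by (simp add: ThetaCat_def)
    have "theta_mor C (theta_id C cs)" by (rule theta_id_mor[OF cat cs])
    moreover have "\<forall>i<length cs. (cs!i, [Idn C (cs!i)]) \<in> Mplus M" using cs W(2) nth_mem by (metis subset_code(1))
    moreover have "sorted_wrt (<) [0..<Suc (length cs)]" by (rule sorted_wrt_upt)
    ultimately show "Idn (ThetaCat C) cs \<in> theta_plus C M"
      by (simp add: ThetaCat_def theta_id_def theta_plus_unf del: upt_Suc)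
  qed
  have 3: "\<forall>f\<in>theta_plus C M. \<forall>g\<in>theta_plus C M. Cod (ThetaCat C) f = Dom (ThetaCat C) g \<longrightarrow>
          Cmp (ThetaCat C) g f \<in> theta_plus C M"
  proof (intro ballI impI)
    fix f g assume f: "f \<in> theta_plus C M" and g: "g \<in> theta_plus C M"
      and fg: "Cod (ThetaCat C) f = Dom (ThetaCat C) g"
    obtain cs ds a F where fe: "f = (cs, ds, a, F)" by (cases f) auto
    obtain ds' es b G where ge: "g = (ds', es, b, G)" by (cases g) auto
    have dd: "ds' = ds" using fg fe ge by (simp add: ThetaCat_def)
    have phi: "theta_mor C (cs, ds, a, F)" and sa: "sorted_wrt (<) a"
      and fm: "\<forall>i<length cs. (cs ! i, F ! i) \<in> Mplus M"
      using f fe by (auto simp: theta_plus_unf)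
    have psi: "theta_mor C (ds, es, b, G)" and sb: "sorted_wrt (<) b"
      and gm: "\<forall>j<length ds. (ds ! j, G ! j) \<in> Mplus M"
      using g ge dd by (auto simp: theta_plus_unf)
    note P = theta_morD[OF phi] and Q = theta_morD[OF psi]
    have s1: "sorted_wrt (<) (map (\<lambda>x. b!x) a)"
      unfolding sorted_wrt_iff_nth_less
    proof (intro allI impI)
      fix i j assume ij: "i < j" "j < length (map (\<lambda>x. b!x) a)"
      then have "a!i < a!j" "a!j \<le> length ds" using sa P(3,5) by (auto simp: sorted_wrt_iff_nth_less)
      then show "map (\<lambda>x. b!x) a ! i < map (\<lambda>x. b!x) a ! j" using ij sb Q(3)
        by (simp add: sorted_wrt_iff_nth_less)
    qed
    have s2: "\<forall>i<length cs. (cs!i, map (tH C a F G) [0..<length cs] ! i) \<in> Mplus M"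
    proof (intro allI impI)
      fix i assume i: "i < length cs"
      have ai: "a!i \<le> a!Suc i" "a!Suc i \<le> length ds" using P(3,4,5) i by (auto simp: sorted_nth_mono)
      let ?gss = "take (a!Suc i - a!i) (drop (a!i) G)"
      have lg: "length ?gss = length (F!i)" using ai P(7)[OF i] Q(6) by simp
      have cg: "\<forall>t<length (F!i). (Cod C (F!i!t), ?gss!t) \<in> Mplus M"
      proof (intro allI impI)
        fix t assume t: "t < length (F!i)"
        then have tt: "t < a!Suc i - a!i" using P(7)[OF i] by simp
        then show "(Cod C (F!i!t), ?gss!t) \<in> Mplus M"
          using P(10)[OF i tt] gm[rule_format, of "a!i + t"] ai Q(6) by simp
      qed
      show "(cs!i, map (tH C a F G) [0..<length cs] ! i) \<in> Mplus M"
        using W(3)[OF fm[rule_format, OF i] lg cg] i by (simp add: tH_def)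
    qed
    show "Cmp (ThetaCat C) g f \<in> theta_plus C M"
      using comp_mor[OF cat phi psi] s1 s2 fe ge dd
      by (simp add: ThetaCat_def theta_comp_eq theta_plus_unf)
  qed
  show ?thesis unfolding wide_subcat_def using 1 2 3 by blast
qed



lemma sum_list_map_nth: "sum_list (map f xs) = (\<Sum>i<length xs. f (xs!i))"
  by (simp add: sum_list_sum_nth atLeast0LessThan)

lemma tele:
  fixes a :: "nat list"
  assumes "sorted a" "m < length a"
  shows "(\<Sum>i<m. \<Sum>j=a!i..<a!Suc i. g j) = (\<Sum>j=a!0..<a!m. (g j::nat))"
  using assms
proof (induction m)
  case 0 then show ?case by simp
next
  case (Suc m)
  have "a!0 \<le> a!m" "a!m \<le> a!Suc m" using Suc.prems by (auto simp: sorted_nth_mono)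
  then show ?case using Suc by (simp add: sum.atLeastLessThan_concat)
qed


lemma id_list_strict:
  fixes a :: "nat list"
  assumes "sorted_wrt (<) a" "length a = Suc n" "\<forall>x\<in>set a. x \<le> n"
  shows "a = [0..<Suc n]"
proof -
  have d: "distinct a" "sorted a" using assms(1) by (auto simp: strict_sorted_iff)
  have sub: "set a \<subseteq> {0..n}" using assms(3) by (simp add: subset_iff)
  have c1: "card (set a) = Suc n" using distinct_card[OF d(1)] assms(2) by simp
  have c2: "card {0..n} = Suc n" by simp
  have "set a = {0..n}" using card_subset_eq[OF finite_atLeastAtMost sub] c1 c2 by simp
  then have "set a = set [0..<Suc n]" by (simp only: set_upt atLeastLessThanSuc_atLeastAtMost)
  moreover have "sorted [0..<Suc n]" "distinct [0..<Suc n]" by (rule sorted_upt, rule distinct_upt)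
  ultimately show ?thesis using d sorted_distinct_set_unique[of a "[0..<Suc n]"] by blast
qed

lemma id_list_surj:
  fixes a :: "nat list"
  assumes "sorted a" "length a = Suc n" "set a = {0..n}"
  shows "a = [0..<Suc n]"
proof -
  have "card (set a) = length a" using assms(2,3) by simp
  then have "distinct a" by (rule card_distinct)
  moreover have "set a = set [0..<Suc n]" using assms(3) by (simp only: set_upt atLeastLessThanSuc_atLeastAtMost)
  moreover have "sorted [0..<Suc n]" "distinct [0..<Suc n]" by (rule sorted_upt, rule distinct_upt)
  ultimately show ?thesis using assms(1) sorted_distinct_set_unique[of a "[0..<Suc n]"] by blast
qed

lemma jump_exists:
  fixes a :: "nat list"
  assumes "sorted a" "set a = {0..n}" "length a = Suc m" "j < n"
  shows "\<exists>i<m. a!i = j \<and> a!Suc i = Suc j"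
proof -
  have am: "a!m = n" by (rule surj_last[OF assms(1,2,3)])
  have a0: "a!0 = 0" by (rule surj_first[OF assms(1,2)])
  define t where "t = (LEAST t. j < a!t)"
  have ex: "j < a!m" using am assms(4) by simp
  have t1: "j < a!t" unfolding t_def by (rule LeastI[of "\<lambda>t. j < a!t", OF ex])
  have t2: "t \<le> m" unfolding t_def by (rule Least_le, rule ex)
  have "t \<noteq> 0"
  proof
    assume "t = 0" then show False using t1 a0 by simp
  qed
  then obtain i where i: "t = Suc i" by (cases t) auto
  have "\<not> j < a!i" using not_less_Least[of i "\<lambda>t. j < a!t"] i unfolding t_def by simp
  then have "a!i \<le> j" by simp
  moreover have "a!Suc i \<le> Suc (a!i)" using surj_step[OF assms(1,2)] i t2 assms(3) by simp
  ultimately have "a!i = j \<and> a!Suc i = Suc j" using t1 i by simp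
  moreover have "i < m" using i t2 by simp
  ultimately show ?thesis by blast
qed



lemma sum_shift_ivl:
  assumes "p \<le> (q::nat)"
  shows "(\<Sum>k<q-p. g (p+k)) = (\<Sum>j=p..<q. (g j::nat))"
proof -
  have "(\<Sum>j=p..<q. g j) = sum g {0+p..<(q-p)+p}" using assms by simp
  also have "\<dots> = (\<Sum>k=0..<q-p. g (k+p))" by (rule sum.shift_bounds_nat_ivl)
  finally show ?thesis by (simp add: atLeast0LessThan add.commute)
qed

lemma plus_deg:
  assumes MR: "is_multi_reedy C M" and f: "(cs, ds, a, F) \<in> theta_plus C M"
  shows "theta_deg M cs \<le> theta_deg M ds \<and>
     (theta_deg M cs = theta_deg M ds \<longrightarrow> (cs, ds, a, F) = theta_id C cs)"
proof -
  have phi: "theta_mor C (cs, ds, a, F)" and sa: "sorted_wrt (<) a"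
    and fm: "\<forall>i<length cs. (cs ! i, F ! i) \<in> Mplus M"
    using f by (auto simp: theta_plus_unf)
  note P = theta_morD[OF phi]
  have degP: "\<forall>(c, ds)\<in>Mplus M. Mdeg M c \<le> sum_list (map (\<lambda>d. Mdeg M (Cod C d)) ds)"
    and degI: "\<forall>f. (Dom C f, [f]) \<in> Mplus M \<and> Mdeg M (Dom C f) = Mdeg M (Cod C f) \<longrightarrow> f = Idn C (Dom C f)"
    using MR unfolding is_multi_reedy_def by auto
  let ?m = "length cs" and ?n = "length ds"
  have d: "distinct a" "sorted a" using sa by (auto simp: strict_sorted_iff)
  have sub: "set a \<subseteq> {0..?n}"
  proof
    fix x assume "x \<in> set a"
    then obtain t where "t < length a" "x = a!t" by (auto simp: in_set_conv_nth)
    then show "x \<in> {0..?n}" using P(3,5) by simp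
  qed
  have "card (set a) \<le> card {0..?n}" by (rule card_mono[OF finite_atLeastAtMost sub])
  then have mn: "?m \<le> ?n" using distinct_card[OF d(1)] P(3) by simp
  define g where "g j = Mdeg M (ds!j)" for j
  have blk: "\<And>i. i < ?m \<Longrightarrow> Mdeg M (cs!i) \<le> (\<Sum>j=a!i..<a!Suc i. g j)"
  proof -
    fix i assume i: "i < ?m"
    have "Mdeg M (cs!i) \<le> sum_list (map (\<lambda>d. Mdeg M (Cod C d)) (F!i))"
      using degP fm i by auto
    also have "\<dots> = (\<Sum>k<a!Suc i - a!i. g (a!i + k))"
      unfolding sum_list_map_nth g_def using P(7,10)[OF i] by simp
    also have "\<dots> = (\<Sum>j=a!i..<a!Suc i. g j)"
      using P(3) d(2) i by (intro sum_shift_ivl) (simp add: sorted_nth_mono)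
    finally show "Mdeg M (cs!i) \<le> (\<Sum>j=a!i..<a!Suc i. g j)" .
  qed
  have s1: "sum_list (map (Mdeg M) cs) \<le> (\<Sum>j=a!0..<a!?m. g j)"
  proof -
    have "sum_list (map (Mdeg M) cs) = (\<Sum>i<?m. Mdeg M (cs!i))" by (rule sum_list_map_nth)
    also have "\<dots> \<le> (\<Sum>i<?m. \<Sum>j=a!i..<a!Suc i. g j)" using blk by (intro sum_mono) simp
    also have "\<dots> = (\<Sum>j=a!0..<a!?m. g j)" using tele[OF d(2)] P(3) by simp
    finally show ?thesis .
  qed
  have s2: "(\<Sum>j=a!0..<a!?m. g j) \<le> sum_list (map (Mdeg M) ds)"
  proof -
    have "a!?m \<le> ?n" using P(5) by simp
    then have "{a!0..<a!?m} \<subseteq> {..<?n}" by auto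
    then have "(\<Sum>j=a!0..<a!?m. g j) \<le> (\<Sum>j<?n. g j)" by (intro sum_mono2) auto
    then show ?thesis unfolding sum_list_map_nth g_def .
  qed
  have le: "theta_deg M cs \<le> theta_deg M ds" unfolding theta_deg_def using mn s1 s2 by simp
  moreover have "theta_deg M cs = theta_deg M ds \<longrightarrow> (cs, ds, a, F) = theta_id C cs"
  proof
    assume eq: "theta_deg M cs = theta_deg M ds"
    have mn': "?m = ?n" and seq: "sum_list (map (Mdeg M) cs) = sum_list (map (Mdeg M) ds)"
      using eq mn s1 s2 unfolding theta_deg_def by auto
    have "\<forall>x\<in>set a. x \<le> ?m" using sub mn' by auto
    then have aid: "a = [0..<Suc ?m]" using id_list_strict[OF sa] P(3) by blast
    have ai: "\<And>i. i \<le> ?m \<Longrightarrow> a!i = i" using aid by (simp del: upt_Suc add: nth_upt)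
    have bl: "\<And>i. i \<in> {..<?m} \<Longrightarrow> Mdeg M (cs!i) \<le> Mdeg M (ds!i)"
    proof -
      fix i assume "i \<in> {..<?m}"
      then have i: "i < ?m" by simp
      have "(\<Sum>j=a!i..<a!Suc i. g j) = g i" using ai[of i] ai[of "Suc i"] i by simp
      then show "Mdeg M (cs!i) \<le> Mdeg M (ds!i)" using blk[OF i] g_def by simp
    qed
    have seq': "(\<Sum>i<?m. Mdeg M (cs!i)) = (\<Sum>i<?m. Mdeg M (ds!i))"
      using seq mn' unfolding sum_list_map_nth by simp
    have pe: "\<And>i. i < ?m \<Longrightarrow> Mdeg M (cs!i) = Mdeg M (ds!i)"
    proof -
      fix i assume "i < ?m"
      then show "Mdeg M (cs!i) = Mdeg M (ds!i)" using sum_mono_inv[OF seq' bl, of i] by simp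
    qed
    have comp: "\<And>i. i < ?m \<Longrightarrow> F!i = [Idn C (cs!i)] \<and> ds!i = cs!i"
    proof -
      fix i assume i: "i < ?m"
      have l1: "length (F!i) = 1" using P(7)[OF i] ai[of i] ai[of "Suc i"] i by simp
      then have Fi: "F!i = [F!i!0]" by (cases "F!i") auto
      have z: "0 < a!Suc i - a!i" using l1 P(7)[OF i] by simp
      have dc: "Dom C (F!i!0) = cs!i" "Cod C (F!i!0) = ds!i" using P(9,10)[OF i z] ai[of i] i by auto
      have "(cs!i, F!i) \<in> Mplus M" using fm i by simp
      then have "(Dom C (F!i!0), [F!i!0]) \<in> Mplus M" using Fi dc by simp
      then have e: "F!i!0 = Idn C (cs!i)" using degI[rule_format, of "F!i!0"] pe[OF i] dc by simp
      have "cs!i \<in> Ob C" using P(1) i by (simp add: subset_iff)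
      then have "ds!i = cs!i" using dc(2) e catD(5)[OF mreedyD(1)[OF MR]] by simp
      then show "F!i = [Idn C (cs!i)] \<and> ds!i = cs!i" using Fi e by simp
    qed
    have "ds = cs" using comp mn' by (intro nth_equalityI) auto
    moreover have "F = map (\<lambda>c. [Idn C c]) cs" using comp P(6) by (intro nth_equalityI) auto
    ultimately show "(cs, ds, a, F) = theta_id C cs" using aid by (simp add: theta_id_def del: upt_Suc)
  qed
  ultimately show ?thesis by blast
qed



lemma minus_deg:
  assumes MR: "is_multi_reedy C M" and f: "(cs, ds, a, F) \<in> theta_minus C M"
  shows "theta_deg M ds \<le> theta_deg M cs \<and>
     (theta_deg M ds = theta_deg M cs \<longrightarrow> (cs, ds, a, F) = theta_id C cs)"
proof -
  have phi: "theta_mor C (cs, ds, a, F)" and sa: "set a = {0..length ds}"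
    and fm: "\<forall>i<length cs. a ! i < a ! Suc i \<longrightarrow> F ! i ! 0 \<in> Mminus M"
    using f by (auto simp: theta_minus_unf)
  note P = theta_morD[OF phi]
  have degM: "\<forall>f\<in>Mminus M. Mdeg M (Cod C f) \<le> Mdeg M (Dom C f) \<and>
        (Mdeg M (Cod C f) = Mdeg M (Dom C f) \<longrightarrow> f = Idn C (Dom C f))"
    using MR unfolding is_multi_reedy_def by auto
  let ?m = "length cs" and ?n = "length ds"
  have "card (set a) \<le> length a" by (rule card_length)
  then have nm: "?n \<le> ?m" using sa P(3) by simp
  define J where "J = {i. i < ?m \<and> a!i < a!Suc i}"
  have JF: "\<And>i. i \<in> J \<Longrightarrow> Mdeg M (ds!(a!i)) \<le> Mdeg M (cs!i)"
  proof -
    fix i assume "i \<in> J"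
    then have i: "i < ?m" and ji: "a!i < a!Suc i" unfolding J_def by auto
    have z: "0 < a!Suc i - a!i" using ji by simp
    have "F!i!0 \<in> Mminus M" using fm i ji by simp
    then show "Mdeg M (ds!(a!i)) \<le> Mdeg M (cs!i)" using degM P(9,10)[OF i z] by auto
  qed
  have bij: "bij_betw (\<lambda>i. a!i) J {..<?n}"
    unfolding bij_betw_def
  proof (intro conjI)
    show "inj_on (\<lambda>i. a!i) J"
    proof (rule inj_onI)
      have key: "\<And>i i'. i \<in> J \<Longrightarrow> i' \<in> J \<Longrightarrow> i < i' \<Longrightarrow> a!i < a!i'"
      proof -
        fix i i' assume "i \<in> J" "i' \<in> J" "i < i'"
        then have "a!i < a!Suc i" "a!Suc i \<le> a!i'" "i' < ?m" unfolding J_def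
          using P(3,4) by (auto simp: sorted_nth_mono)
        then show "a!i < a!i'" by simp
      qed
      fix i i' assume "i \<in> J" "i' \<in> J" "a!i = a!i'"
      then show "i = i'" using key[of i i'] key[of i' i] by (metis less_irrefl nat_neq_iff)
    qed
    show "(\<lambda>i. a!i) ` J = {..<?n}"
    proof
      show "(\<lambda>i. a!i) ` J \<subseteq> {..<?n}"
      proof
        fix x assume "x \<in> (\<lambda>i. a!i) ` J"
        then obtain i where "i \<in> J" "x = a!i" by auto
        then have "a!i < a!Suc i" "a!Suc i \<le> ?n" using P(5) unfolding J_def by auto
        then show "x \<in> {..<?n}" using \<open>x = a!i\<close> by simp
      qed
      show "{..<?n} \<subseteq> (\<lambda>i. a!i) ` J"
      proof
        fix j assume "j \<in> {..<?n}"
        then obtain i where "i < ?m" "a!i = j" "a!Suc i = Suc j"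
          using jump_exists[OF P(4) sa P(3)] by auto
        then have "i \<in> J" "j = a!i" unfolding J_def by auto
        then show "j \<in> (\<lambda>i. a!i) ` J" by blast
      qed
    qed
  qed
  have Jsub: "J \<subseteq> {..<?m}" unfolding J_def by auto
  have s: "sum_list (map (Mdeg M) ds) \<le> sum_list (map (Mdeg M) cs)"
  proof -
    have "sum_list (map (Mdeg M) ds) = (\<Sum>j<?n. Mdeg M (ds!j))" by (rule sum_list_map_nth)
    also have "\<dots> = (\<Sum>i\<in>J. Mdeg M (ds!(a!i)))" by (rule sum.reindex_bij_betw[OF bij, symmetric])
    also have "\<dots> \<le> (\<Sum>i\<in>J. Mdeg M (cs!i))" using JF by (rule sum_mono)
    also have "\<dots> \<le> (\<Sum>i<?m. Mdeg M (cs!i))" using Jsub by (intro sum_mono2) auto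
    also have "\<dots> = sum_list (map (Mdeg M) cs)" by (rule sum_list_map_nth[symmetric])
    finally show ?thesis .
  qed
  have le: "theta_deg M ds \<le> theta_deg M cs" unfolding theta_deg_def using nm s by simp
  moreover have "theta_deg M ds = theta_deg M cs \<longrightarrow> (cs, ds, a, F) = theta_id C cs"
  proof
    assume eq: "theta_deg M ds = theta_deg M cs"
    have mn': "?m = ?n" and seq: "sum_list (map (Mdeg M) ds) = sum_list (map (Mdeg M) cs)"
      using eq nm s unfolding theta_deg_def by auto
    have aid: "a = [0..<Suc ?m]" using id_list_surj[OF P(4)] P(3) sa mn' by simp
    have ai: "\<And>i. i \<le> ?m \<Longrightarrow> a!i = i" using aid by (simp del: upt_Suc add: nth_upt)
    have JJ: "\<And>i. i < ?m \<Longrightarrow> i \<in> J" unfolding J_def using ai by simp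
    have bl: "\<And>i. i \<in> {..<?m} \<Longrightarrow> Mdeg M (ds!i) \<le> Mdeg M (cs!i)"
      using JF JJ ai by fastforce
    have seq': "(\<Sum>i<?m. Mdeg M (ds!i)) = (\<Sum>i<?m. Mdeg M (cs!i))"
      using seq mn' unfolding sum_list_map_nth by simp
    have pe: "\<And>i. i < ?m \<Longrightarrow> Mdeg M (ds!i) = Mdeg M (cs!i)"
    proof -
      fix i assume "i < ?m"
      then show "Mdeg M (ds!i) = Mdeg M (cs!i)" using sum_mono_inv[OF seq' bl, of i] by simp
    qed
    have comp: "\<And>i. i < ?m \<Longrightarrow> F!i = [Idn C (cs!i)] \<and> ds!i = cs!i"
    proof -
      fix i assume i: "i < ?m"
      have l1: "length (F!i) = 1" using P(7)[OF i] ai[of i] ai[of "Suc i"] i by simp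
      then have Fi: "F!i = [F!i!0]" by (cases "F!i") auto
      have z: "0 < a!Suc i - a!i" using l1 P(7)[OF i] by simp
      have dc: "Dom C (F!i!0) = cs!i" "Cod C (F!i!0) = ds!i" using P(9,10)[OF i z] ai[of i] i by auto
      have "F!i!0 \<in> Mminus M" using fm i z by simp
      then have e: "F!i!0 = Idn C (cs!i)" using degM pe[OF i] dc by auto
      have "cs!i \<in> Ob C" using P(1) i by (simp add: subset_iff)
      then have "ds!i = cs!i" using dc(2) e catD(5)[OF mreedyD(1)[OF MR]] by simp
      then show "F!i = [Idn C (cs!i)] \<and> ds!i = cs!i" using Fi e by simp
    qed
    have "ds = cs" using comp mn' by (intro nth_equalityI) auto
    moreover have "F = map (\<lambda>c. [Idn C c]) cs" using comp P(6) by (intro nth_equalityI) auto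
    ultimately show "(cs, ds, a, F) = theta_id C cs" using aid by (simp add: theta_id_def del: upt_Suc)
  qed
  ultimately show ?thesis by blast
qed



definition jmp :: "nat list \<Rightarrow> nat \<Rightarrow> bool" where "jmp a i \<longleftrightarrow> a!i < a!Suc i"
definition cnt :: "nat list \<Rightarrow> nat \<Rightarrow> nat" where "cnt a i = length (filter (jmp a) [0..<i])"
definition jl :: "nat list \<Rightarrow> nat \<Rightarrow> nat list" where "jl a m = filter (jmp a) [0..<m]"

lemma cnt_0[simp]: "cnt a 0 = 0" by (simp add: cnt_def)
lemma cnt_Suc: "cnt a (Suc i) = cnt a i + (if jmp a i then 1 else 0)" by (simp add: cnt_def)
lemma cnt_mono: "i \<le> i' \<Longrightarrow> cnt a i \<le> cnt a i'"
  by (induction i' rule: dec_induct) (auto simp: cnt_Suc)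
lemma cnt_jl: "cnt a m = length (jl a m)" by (simp add: cnt_def jl_def)

lemma jl_cnt:
  assumes "i < m" "jmp a i" shows "jl a m ! cnt a i = i"
proof -
  have "[0..<m] = [0..<i] @ [i..<m]" using assms(1) by (metis le_add_diff_inverse less_imp_le_nat upt_add_eq_append zero_le)
  moreover have "[i..<m] = i # [Suc i..<m]" using assms(1) by (simp add: upt_conv_Cons)
  ultimately have "jl a m = filter (jmp a) [0..<i] @ i # filter (jmp a) [Suc i..<m]"
    using assms(2) by (simp add: jl_def)
  then show ?thesis by (simp add: cnt_def nth_append)
qed

lemma jl_props:
  assumes "l < length (jl a m)"
  shows "jl a m ! l < m" "jmp a (jl a m ! l)" "cnt a (jl a m ! l) = l"
proof -
  have "jl a m ! l \<in> set (jl a m)" using assms by simp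
  then show 1: "jl a m ! l < m" and 2: "jmp a (jl a m ! l)" by (auto simp: jl_def)
  have d: "distinct (jl a m)" by (simp add: jl_def)
  have "cnt a (jl a m ! l) < cnt a (Suc (jl a m ! l))" using 2 by (simp add: cnt_Suc)
  also have "\<dots> \<le> cnt a m" using 1 by (intro cnt_mono) simp
  finally have "cnt a (jl a m ! l) < length (jl a m)" by (simp add: cnt_jl)
  moreover have "jl a m ! cnt a (jl a m ! l) = jl a m ! l" using jl_cnt[OF 1 2] .
  ultimately show "cnt a (jl a m ! l) = l" using d assms nth_eq_iff_index_eq by blast
qed

lemma cnt_lt: "i < m \<Longrightarrow> jmp a i \<Longrightarrow> cnt a i < length (jl a m)"
proof -
  assume i: "i < m" and j: "jmp a i"
  have "cnt a i < cnt a (Suc i)" using j by (simp add: cnt_Suc)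
  also have "\<dots> \<le> cnt a m" using i by (intro cnt_mono) simp
  finally show ?thesis by (simp add: cnt_jl)
qed

definition apl :: "nat list \<Rightarrow> nat \<Rightarrow> nat list" where
  "apl a m = a!0 # map (\<lambda>j. a!Suc j) (jl a m)"

lemma apl_cnt:
  assumes "sorted a" "length a = Suc m" "i \<le> m"
  shows "apl a m ! cnt a i = a!i"
  using assms(3)
proof (induction i)
  case 0 then show ?case by (simp add: apl_def)
next
  case (Suc i)
  show ?case
  proof (cases "jmp a i")
    case True
    have i: "i < m" using Suc by simp
    have "apl a m ! cnt a (Suc i) = apl a m ! Suc (cnt a i)" using True by (simp add: cnt_Suc)
    also have "\<dots> = a!Suc (jl a m ! cnt a i)" using cnt_lt[OF i True] by (simp add: apl_def)
    also have "\<dots> = a!Suc i" using jl_cnt[OF i True] by simp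
    finally show ?thesis .
  next
    case False
    have "a!i \<le> a!Suc i" using assms Suc.prems by (simp add: sorted_nth_mono)
    then have "a!Suc i = a!i" using False by (simp add: jmp_def)
    then show ?thesis using Suc False by (simp add: cnt_Suc)
  qed
qed

lemma apl_nth:
  assumes "sorted a" "length a = Suc m" "l < length (jl a m)"
  shows "apl a m ! l = a!(jl a m ! l)" "apl a m ! Suc l = a!Suc (jl a m ! l)"
proof -
  show "apl a m ! l = a!(jl a m ! l)"
    using apl_cnt[OF assms(1,2), of "jl a m ! l"] jl_props[OF assms(3)] by simp
  show "apl a m ! Suc l = a!Suc (jl a m ! l)" using assms(3) by (simp add: apl_def)
qed



lemma mr_fact:
  assumes "is_multi_reedy C M" "is_multimor C c fs"
  shows "\<exists>s gs. s \<in> Mminus M \<and> Dom C s = c \<and> (Cod C s, gs) \<in> Mplus M \<and> fs = map (\<lambda>g. Cmp C g s) gs"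
  using assms unfolding is_multi_reedy_def by blast

lemma mr_uniq:
  assumes "is_multi_reedy C M" "is_multimor C c fs"
    "s \<in> Mminus M" "Dom C s = c" "(Cod C s, gs) \<in> Mplus M" "fs = map (\<lambda>g. Cmp C g s) gs"
    "s' \<in> Mminus M" "Dom C s' = c" "(Cod C s', gs') \<in> Mplus M" "fs = map (\<lambda>g. Cmp C g s') gs'"
  shows "s = s' \<and> gs = gs'"
proof -
  have "\<forall>s gs s' gs'. s \<in> Mminus M \<and> Dom C s = c \<and> (Cod C s, gs) \<in> Mplus M \<and>
                fs = map (\<lambda>g. Cmp C g s) gs \<and>
                s' \<in> Mminus M \<and> Dom C s' = c \<and> (Cod C s', gs') \<in> Mplus M \<and>
                fs = map (\<lambda>g. Cmp C g s') gs' \<longrightarrow> s = s' \<and> gs = gs'"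
    using assms(1,2) unfolding is_multi_reedy_def by blast
  then show ?thesis using assms(3-) by blast
qed

lemma factor_exists:
  assumes MR: "is_multi_reedy C M" and phi: "theta_mor C (cs, ds, a, F)"
  shows "\<exists>p q. q \<in> theta_minus C M \<and> p \<in> theta_plus C M \<and> fst (snd q) = fst p \<and>
     (cs, ds, a, F) = theta_comp C p q"
proof -
  note P = theta_morD[OF phi] and cat = mreedyD(1)[OF MR]
  note Ct = catD[OF cat] and Wm = wsubD[OF mreedyD(2)[OF MR]] and Wp = wsubmD[OF mreedyD(3)[OF MR]]
  let ?m = "length cs"
  have "\<forall>i. \<exists>sg. i < ?m \<longrightarrow> (fst sg \<in> Mminus M \<and> Dom C (fst sg) = cs!i \<and> (Cod C (fst sg), snd sg) \<in> Mplus M \<and>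
        F!i = map (\<lambda>g. Cmp C g (fst sg)) (snd sg))"
  proof
    fix i
    show "\<exists>sg. i < ?m \<longrightarrow> (fst sg \<in> Mminus M \<and> Dom C (fst sg) = cs!i \<and> (Cod C (fst sg), snd sg) \<in> Mplus M \<and>
        F!i = map (\<lambda>g. Cmp C g (fst sg)) (snd sg))"
    proof (cases "i < ?m")
      case True
      have "is_multimor C (cs!i) (F!i)" unfolding is_multimor_def
        using P(1,7,8,9) True by (auto simp: in_set_conv_nth subset_iff)
      then show ?thesis using mr_fact[OF MR] by fastforce
    qed simp
  qed
  then obtain SG where SG: "\<And>i. i < ?m \<Longrightarrow> fst (SG i) \<in> Mminus M \<and> Dom C (fst (SG i)) = cs!i \<and>
      (Cod C (fst (SG i)), snd (SG i)) \<in> Mplus M \<and> F!i = map (\<lambda>g. Cmp C g (fst (SG i))) (snd (SG i))"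
    by (metis choice)
  define S where "S i = fst (SG i)" for i
  define GS where "GS i = snd (SG i)" for i
  have Sm: "\<And>i. i < ?m \<Longrightarrow> S i \<in> Mminus M" "\<And>i. i < ?m \<Longrightarrow> S i \<in> Mor C"
    "\<And>i. i < ?m \<Longrightarrow> Dom C (S i) = cs!i" "\<And>i. i < ?m \<Longrightarrow> (Cod C (S i), GS i) \<in> Mplus M"
    "\<And>i. i < ?m \<Longrightarrow> F!i = map (\<lambda>g. Cmp C g (S i)) (GS i)"
    using SG Wm(1) unfolding S_def GS_def by blast+
  have GSm: "\<And>i t. i < ?m \<Longrightarrow> t < length (GS i) \<Longrightarrow> GS i ! t \<in> Mor C \<and> Dom C (GS i ! t) = Cod C (S i)"
    using Wp(1)[OF Sm(4)] unfolding is_multimor_def by auto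
  have GSl: "\<And>i. i < ?m \<Longrightarrow> length (GS i) = a!Suc i - a!i" using Sm(5) P(7) by (metis length_map)
  have GSc: "\<And>i t. i < ?m \<Longrightarrow> t < length (GS i) \<Longrightarrow> Cod C (GS i ! t) = ds!(a!i + t)"
  proof -
    fix i t assume i: "i < ?m" and t: "t < length (GS i)"
    have "F!i!t = Cmp C (GS i ! t) (S i)" using Sm(5)[OF i] t by simp
    then have "Cod C (F!i!t) = Cod C (GS i ! t)" using Ct(8) Sm(2)[OF i] GSm[OF i t] by simp
    then show "Cod C (GS i ! t) = ds!(a!i + t)" using P(10)[OF i] t GSl[OF i] by simp
  qed
  define js where "js = jl a ?m"
  define k where "k = length js"
  define am where "am = map (cnt a) [0..<Suc ?m]"
  define ap where "ap = apl a ?m"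
  define es where "es = map (\<lambda>j. Cod C (S j)) js"
  define Fq where "Fq = map (\<lambda>i. if jmp a i then [S i] else []) [0..<?m]"
  define Gp where "Gp = map GS js"
  have jsp: "\<And>l. l < k \<Longrightarrow> js!l < ?m \<and> jmp a (js!l) \<and> cnt a (js!l) = l"
    using jl_props unfolding js_def k_def by blast
  have amn: "\<And>i. i \<le> ?m \<Longrightarrow> am!i = cnt a i" unfolding am_def by (simp del: upt_Suc add: nth_upt)
  have amk: "am!?m = k" using amn[of ?m] by (simp add: cnt_jl js_def k_def)
  have amS: "\<And>i. i < ?m \<Longrightarrow> am!Suc i = am!i + (if jmp a i then 1 else 0)"
    using amn by (simp add: cnt_Suc)
  have les: "length es = k" unfolding es_def k_def by simp
  have Fqn: "\<And>i. i < ?m \<Longrightarrow> Fq!i = (if jmp a i then [S i] else [])" unfolding Fq_def by simp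
  have esn: "\<And>i. i < ?m \<Longrightarrow> jmp a i \<Longrightarrow> es!(am!i) = Cod C (S i)"
    using amn jl_cnt cnt_lt unfolding es_def js_def by simp
  have nj: "\<And>i. i < ?m \<Longrightarrow> \<not> jmp a i \<Longrightarrow> a!Suc i = a!i"
    using P(3,4) by (metis jmp_def le_neq_implies_less lessI less_imp_le_nat nat_less_le sorted_nth_mono Suc_mono)
  have qmor: "theta_mor C (cs, es, am, Fq)"
    unfolding theta_mor_unf
  proof (intro conjI allI impI)
    show "set cs \<subseteq> Ob C" by (rule P(1))
    show "set es \<subseteq> Ob C" unfolding es_def using jsp Sm(2) Ct(2) by (auto simp: in_set_conv_nth k_def)
    show "length am = Suc ?m" unfolding am_def by simp
    show "sorted am" unfolding sorted_iff_nth_mono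
      using amn cnt_mono by (simp add: am_def del: upt_Suc)
    show "\<forall>x\<in>set am. x \<le> length es"
      using cnt_mono[of _ ?m a] by (auto simp: am_def les k_def js_def cnt_jl)
    show "length Fq = ?m" unfolding Fq_def by simp
    fix i assume i: "i < ?m"
    show "length (Fq!i) = am!Suc i - am!i" using Fqn[OF i] amS[OF i] by simp
    fix t assume t: "t < length (Fq!i)"
    then have jt: "jmp a i" "t = 0" using Fqn[OF i] by (auto split: if_splits)
    show "Fq!i!t \<in> Mor C" using Fqn[OF i] jt Sm(2)[OF i] by simp
    show "Dom C (Fq!i!t) = cs!i" using Fqn[OF i] jt Sm(3)[OF i] by simp
    show "Cod C (Fq!i!t) = es!(am!i + t)" using Fqn[OF i] jt esn[OF i] by simp
  qed
  have sam: "set am = {0..length es}"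
  proof
    show "set am \<subseteq> {0..length es}" using qmor by (auto simp: theta_mor_unf)
    show "{0..length es} \<subseteq> set am"
    proof
      fix l assume "l \<in> {0..length es}"
      then have l: "l \<le> k" using les by simp
      show "l \<in> set am"
      proof (cases "l = k")
        case True
        then show ?thesis using amk by (metis am_def length_map length_upt lessI minus_nat.diff_0 nth_mem)
      next
        case False
        then have "l < k" using l by simp
        then have "am!(js!l) = l" "js!l < Suc ?m" using jsp[OF \<open>l < k\<close>] amn[of "js!l"] by auto
        then show ?thesis by (metis am_def length_map length_upt minus_nat.diff_0 nth_mem)
      qed
    qed
  qed
  have qm: "(cs, es, am, Fq) \<in> theta_minus C M"
    unfolding theta_minus_unf
  proof (intro conjI allI impI qmor sam)
    fix i assume i: "i < ?m" and "am!i < am!Suc i"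
    then have "jmp a i" using amS[OF i] by (auto split: if_splits)
    then show "Fq!i!0 \<in> Mminus M" using Fqn[OF i] Sm(1)[OF i] by simp
  qed
  have lap: "length ap = Suc k" unfolding ap_def apl_def k_def js_def by simp
  have apn: "\<And>l. l < k \<Longrightarrow> ap!l = a!(js!l) \<and> ap!Suc l = a!Suc (js!l)"
    using apl_nth[OF P(4) P(3)] unfolding ap_def js_def k_def by blast
  have sap: "sorted_wrt (<) ap"
    unfolding sorted_wrt_iff_nth_Suc_transp[OF transp_on_less]
  proof (intro allI impI)
    fix l assume "Suc l < length ap"
    then have lk: "l < k" using lap by simp
    then show "ap!l < ap!Suc l" using apn[OF lk] jsp[OF lk] by (simp add: jmp_def)
  qed
  have pmor: "theta_mor C (es, ds, ap, Gp)"
    unfolding theta_mor_unf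
  proof (intro conjI allI impI)
    show "set es \<subseteq> Ob C" using qmor by (simp add: theta_mor_unf)
    show "set ds \<subseteq> Ob C" by (rule P(2))
    show "length ap = Suc (length es)" using lap les by simp
    show "sorted ap" using sap by (simp add: strict_sorted_iff)
    show "\<forall>x\<in>set ap. x \<le> length ds" unfolding ap_def apl_def
    proof (auto simp: in_set_conv_nth)
      show "a!0 \<le> length ds" using P(5) by simp
      fix i assume "i < length (jl a ?m)"
      then have "jl a ?m ! i < ?m" using jsp unfolding js_def k_def by blast
      then show "a!Suc (jl a ?m ! i) \<le> length ds" using P(5) by simp
    qed
    show "length Gp = length es" unfolding Gp_def les k_def by simp
    fix l assume l: "l < length es"
    then have lk: "l < k" using les by simp
    have jl: "js!l < ?m" "jmp a (js!l)" using jsp[OF lk] by auto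
    show "length (Gp!l) = ap!Suc l - ap!l" using GSl[OF jl(1)] apn[OF lk] lk unfolding Gp_def k_def by simp
    fix t assume t: "t < length (Gp!l)"
    then have t': "t < length (GS (js!l))" using lk unfolding Gp_def k_def by simp
    show "Gp!l!t \<in> Mor C" using GSm[OF jl(1) t'] lk unfolding Gp_def k_def by simp
    show "Dom C (Gp!l!t) = es!l" using GSm[OF jl(1) t'] lk unfolding Gp_def es_def k_def by simp
    show "Cod C (Gp!l!t) = ds!(ap!l + t)" using GSc[OF jl(1) t'] lk apn[OF lk] unfolding Gp_def k_def by simp
  qed
  have pp: "(es, ds, ap, Gp) \<in> theta_plus C M"
    unfolding theta_plus_unf
  proof (intro conjI allI impI pmor)
    show "sorted_wrt (<) ap" by (rule sap)
    fix l assume l: "l < length es"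
    then have lk: "l < k" using les by simp
    have jl: "js!l < ?m" using jsp[OF lk] by auto
    show "(es!l, Gp!l) \<in> Mplus M" using Sm(4)[OF jl] lk unfolding es_def Gp_def k_def by simp
  qed
  have c1: "map (\<lambda>x. ap!x) am = a"
  proof (rule nth_equalityI)
    show "length (map (\<lambda>x. ap!x) am) = length a" using P(3) by (simp add: am_def)
    fix i assume "i < length (map (\<lambda>x. ap!x) am)"
    then have i: "i \<le> ?m" by (simp add: am_def)
    then show "map (\<lambda>x. ap!x) am ! i = a!i" using amn[OF i] apl_cnt[OF P(4) P(3) i]
      by (simp add: am_def ap_def del: upt_Suc)
  qed
  have c2: "map (tH C am Fq Gp) [0..<?m] = F"
  proof (rule nth_equalityI)
    show "length (map (tH C am Fq Gp) [0..<?m]) = length F" using P(6) by simp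
    fix i assume "i < length (map (tH C am Fq Gp) [0..<?m])"
    then have i: "i < ?m" by simp
    show "map (tH C am Fq Gp) [0..<?m] ! i = F!i"
    proof (cases "jmp a i")
      case True
      have c: "cnt a i < k" using cnt_lt[OF i True] unfolding k_def js_def .
      have "take (am!Suc i - am!i) (drop (am!i) Gp) = [Gp!(am!i)]"
        using amS[OF i] True amn[of i] i c unfolding Gp_def k_def
        by (simp flip: Cons_nth_drop_Suc)
      moreover have "Gp!(am!i) = GS i" using amn[of i] i c jl_cnt[OF i True] unfolding Gp_def k_def js_def by simp
      ultimately show ?thesis using i True Fqn[OF i] Sm(5)[OF i]
        by (simp add: tH_def postcomp_Cons postcomp_Nil)
    next
      case False
      have "F!i = []" using P(7)[OF i] nj[OF i False] by simp
      then show ?thesis using i False Fqn[OF i] by (simp add: tH_def postcomp_Nil)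
    qed
  qed
  have "theta_comp C (es, ds, ap, Gp) (cs, es, am, Fq) = (cs, ds, a, F)"
    unfolding theta_comp_eq using c1 c2 by simp
  then show ?thesis using qm pp by fastforce
qed



lemma tH_single:
  assumes "length (Fq!i) = 1" "am!Suc i = Suc (am!i)" "am!i < length Gp"
  shows "tH C am Fq Gp i = map (\<lambda>g. Cmp C g (Fq!i!0)) (Gp!(am!i))"
proof -
  have "Fq!i = [Fq!i!0]" using assms(1) by (cases "Fq!i") auto
  moreover have "take (am!Suc i - am!i) (drop (am!i) Gp) = [Gp!(am!i)]"
    using assms(2,3) by (simp flip: Cons_nth_drop_Suc)
  ultimately show ?thesis unfolding tH_def by (metis postcomp_Cons postcomp_Nil append_Nil2)
qed

lemma factor_char:
  assumes q: "(cs, es, am, Fq) \<in> theta_minus C M" and p: "(es, ds, ap, Gp) \<in> theta_plus C M"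
    and a: "a = map (\<lambda>x. ap!x) am"
  shows "\<forall>i\<le>length cs. am!i = cnt a i" "length es = cnt a (length cs)"
proof -
  have qmor: "theta_mor C (cs, es, am, Fq)" and sam: "set am = {0..length es}"
    using q by (auto simp: theta_minus_unf)
  have pmor: "theta_mor C (es, ds, ap, Gp)" and sap: "sorted_wrt (<) ap"
    using p by (auto simp: theta_plus_unf)
  note Q = theta_morD[OF qmor] and P = theta_morD[OF pmor]
  have an: "\<And>i. i \<le> length cs \<Longrightarrow> a!i = ap!(am!i)" using a Q(3) by simp
  have step: "\<And>i. i < length cs \<Longrightarrow> am!Suc i = am!i + (if jmp a i then 1 else 0)"
  proof -
    fix i assume i: "i < length cs"
    have s1: "am!Suc i \<le> Suc (am!i)" using surj_step[OF Q(4) sam] i Q(3) by simp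
    have s2: "am!i \<le> am!Suc i" using Q(3,4) i by (simp add: sorted_nth_mono)
    have b: "am!Suc i < length ap" using Q(5)[of "Suc i"] i P(3) by simp
    have iff: "am!i < am!Suc i \<longleftrightarrow> jmp a i"
    proof
      assume "am!i < am!Suc i"
      then have "ap!(am!i) < ap!(am!Suc i)" using sap b by (simp add: sorted_wrt_iff_nth_less)
      then show "jmp a i" using an[of i] an[of "Suc i"] i by (simp add: jmp_def)
    next
      assume "jmp a i"
      then have "ap!(am!i) < ap!(am!Suc i)" using an[of i] an[of "Suc i"] i by (simp add: jmp_def)
      then show "am!i < am!Suc i" using s2 by (metis le_neq_implies_less less_irrefl)
    qed
    show "am!Suc i = am!i + (if jmp a i then 1 else 0)" using s1 s2 iff by auto
  qed
  show A: "\<forall>i\<le>length cs. am!i = cnt a i"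
  proof (intro allI impI)
    fix i assume "i \<le> length cs"
    then show "am!i = cnt a i"
    proof (induction i)
      case 0 then show ?case using surj_first[OF Q(4) sam] by simp
    next
      case (Suc i) then show ?case using step[of i] by (simp add: cnt_Suc)
    qed
  qed
  show "length es = cnt a (length cs)" using surj_last[OF Q(4) sam Q(3)] A by simp
qed

lemma factor_unique:
  assumes MR: "is_multi_reedy C M" and phi: "theta_mor C f"
    and q: "q \<in> theta_minus C M" and p: "p \<in> theta_plus C M" and qp: "fst (snd q) = fst p"
    and f: "f = theta_comp C p q"
    and q': "q' \<in> theta_minus C M" and p': "p' \<in> theta_plus C M" and qp': "fst (snd q') = fst p'"
    and f': "f = theta_comp C p' q'"
  shows "p = p' \<and> q = q'"
proof -
  obtain cs es am Fq where qe: "q = (cs, es, am, Fq)" by (cases q) auto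
  obtain es2 ds ap Gp where pe: "p = (es2, ds, ap, Gp)" by (cases p) auto
  obtain cs' es' am' Fq' where qe': "q' = (cs', es', am', Fq')" by (cases q') auto
  obtain es2' ds' ap' Gp' where pe': "p' = (es2', ds', ap', Gp')" by (cases p') auto
  have e2: "es2 = es" "es2' = es'" using qp qp' qe pe qe' pe' by auto
  define a where "a = map (\<lambda>x. ap!x) am"
  define F where "F = map (tH C am Fq Gp) [0..<length cs]"
  have fe: "f = (cs, ds, a, F)" using f qe pe e2 unfolding a_def F_def by (simp add: theta_comp_eq)
  have fe': "f = (cs', ds', map (\<lambda>x. ap'!x) am', map (tH C am' Fq' Gp') [0..<length cs'])"
    using f' qe' pe' e2 by (simp add: theta_comp_eq)
  have cc: "cs' = cs" "ds' = ds" and a': "a = map (\<lambda>x. ap'!x) am'"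
    and F': "F = map (tH C am' Fq' Gp') [0..<length cs]" using fe fe' by auto
  have qq: "(cs, es, am, Fq) \<in> theta_minus C M" and pp: "(es, ds, ap, Gp) \<in> theta_plus C M"
    using q p qe pe e2 by auto
  have qq': "(cs, es', am', Fq') \<in> theta_minus C M" and pp': "(es', ds, ap', Gp') \<in> theta_plus C M"
    using q' p' qe' pe' e2 cc by auto
  have qmor: "theta_mor C (cs, es, am, Fq)" and sam: "set am = {0..length es}"
    and fqm: "\<forall>i<length cs. am!i < am!Suc i \<longrightarrow> Fq!i!0 \<in> Mminus M" using qq by (auto simp: theta_minus_unf)
  have qmor': "theta_mor C (cs, es', am', Fq')" and sam': "set am' = {0..length es'}"
    and fqm': "\<forall>i<length cs. am'!i < am'!Suc i \<longrightarrow> Fq'!i!0 \<in> Mminus M" using qq' by (auto simp: theta_minus_unf)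
  have pmor: "theta_mor C (es, ds, ap, Gp)" and gpm: "\<forall>l<length es. (es!l, Gp!l) \<in> Mplus M"
    using pp by (auto simp: theta_plus_unf)
  have pmor': "theta_mor C (es', ds, ap', Gp')" and gpm': "\<forall>l<length es'. (es'!l, Gp'!l) \<in> Mplus M"
    using pp' by (auto simp: theta_plus_unf)
  note Q = theta_morD[OF qmor] and Q' = theta_morD[OF qmor'] and P = theta_morD[OF pmor]
    and P' = theta_morD[OF pmor'] and Fm = theta_morD[OF phi[unfolded fe]]
  note ch = factor_char[OF qq pp a_def] and ch' = factor_char[OF qq' pp' a']
  let ?m = "length cs"
  have amm: "am' = am"
    using ch(1) ch'(1) Q(3) Q'(3) by (intro nth_equalityI) auto
  have lk: "length es' = length es" using ch(2) ch'(2) by simp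
  have apap: "ap' = ap"
  proof (rule nth_equalityI)
    show "length ap' = length ap" using P(3) P'(3) lk by simp
    fix l assume "l < length ap'"
    then have "l \<in> set am" using sam P'(3) lk by simp
    then obtain i where i: "i < length am" "am!i = l" by (auto simp: in_set_conv_nth)
    have "ap!l = a!i" using a_def i by simp
    moreover have "ap'!l = a!i" using a' i amm by simp
    ultimately show "ap'!l = ap!l" by simp
  qed
  have jc: "\<And>i. i < ?m \<Longrightarrow> am!i < am!Suc i \<Longrightarrow> Fq!i = Fq'!i \<and> Gp!(am!i) = Gp'!(am!i) \<and> es!(am!i) = es'!(am!i)"
  proof -
    fix i assume i: "i < ?m" and j: "am!i < am!Suc i"
    have st: "am!Suc i = Suc (am!i)" using surj_step[OF Q(4) sam, of i] j Q(3) i by simp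
    have l1: "length (Fq!i) = 1" "length (Fq'!i) = 1" using Q(7)[OF i] Q'(7)[OF i] st amm by auto
    have ami: "am!i < length es" using Q(5)[of "Suc i"] i st by simp
    have z: "0 < am!Suc i - am!i" using st by simp
    have s: "Fq!i!0 \<in> Mminus M" "Dom C (Fq!i!0) = cs!i" "Cod C (Fq!i!0) = es!(am!i)"
      using fqm i j Q(9,10)[OF i z] by auto
    have s': "Fq'!i!0 \<in> Mminus M" "Dom C (Fq'!i!0) = cs!i" "Cod C (Fq'!i!0) = es'!(am!i)"
      using fqm' i j Q'(9,10)[OF i, of 0] z amm by auto
    have g: "(Cod C (Fq!i!0), Gp!(am!i)) \<in> Mplus M" using gpm ami s(3) by simp
    have g': "(Cod C (Fq'!i!0), Gp'!(am!i)) \<in> Mplus M" using gpm' ami lk s'(3) by simp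
    have Fi: "F!i = map (\<lambda>g. Cmp C g (Fq!i!0)) (Gp!(am!i))"
      using tH_single[OF l1(1) st, of Gp C] ami P(6) i unfolding F_def by simp
    have Fi': "F!i = map (\<lambda>g. Cmp C g (Fq'!i!0)) (Gp'!(am!i))"
      using tH_single[OF l1(2), of am Gp' C] st amm ami P'(6) lk i F' by simp
    have mm: "is_multimor C (cs!i) (F!i)" unfolding is_multimor_def
      using Fm(1,7,8,9) i by (auto simp: in_set_conv_nth subset_iff)
    have u: "Fq!i!0 = Fq'!i!0 \<and> Gp!(am!i) = Gp'!(am!i)"
      using mr_uniq[OF MR mm s(1,2) g Fi s'(1,2) g' Fi'] .
    have "Fq!i = Fq'!i" using l1 u by (metis length_0_conv length_Suc_conv nth_Cons_0 One_nat_def)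
    then show "Fq!i = Fq'!i \<and> Gp!(am!i) = Gp'!(am!i) \<and> es!(am!i) = es'!(am!i)" using u s(3) s'(3) by simp
  qed
  have FF: "Fq' = Fq"
  proof (rule nth_equalityI)
    show "length Fq' = length Fq" using Q(6) Q'(6) by simp
    fix i assume "i < length Fq'"
    then have i: "i < ?m" using Q'(6) by simp
    show "Fq'!i = Fq!i"
    proof (cases "am!i < am!Suc i")
      case True then show ?thesis using jc[OF i] by simp
    next
      case False
      then have "am!Suc i - am!i = 0" by simp
      then show ?thesis using Q(7)[OF i] Q'(7)[OF i] amm by simp
    qed
  qed
  have lcomp: "\<And>l. l < length es \<Longrightarrow> Gp!l = Gp'!l \<and> es!l = es'!l"
  proof -
    fix l assume l: "l < length es"
    obtain i where i: "i < ?m" "am!i = l" "am!Suc i = Suc l"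
      using jump_exists[OF Q(4) sam Q(3) l] by auto
    then show "Gp!l = Gp'!l \<and> es!l = es'!l" using jc[OF i(1)] by simp
  qed
  have "es' = es" using lcomp lk by (intro nth_equalityI) auto
  moreover have "Gp' = Gp" using lcomp lk P(6) P'(6) by (intro nth_equalityI) auto
  ultimately show ?thesis using qe pe qe' pe' e2 cc amm apap FF by simp
qed



definition jx :: "nat list \<Rightarrow> nat \<Rightarrow> nat \<Rightarrow> nat" where
  "jx a m j = (SOME i. i < m \<and> a!i = j \<and> a!Suc i = Suc j)"

definition arb :: "('o,'m) cat \<Rightarrow> 'o \<Rightarrow> 'o \<Rightarrow> 'm" where
  "arb C c d = (SOME g. g \<in> hom C c d)"

definition mksec :: "('o,'m) cat \<Rightarrow> 'o list \<Rightarrow> 'o list \<Rightarrow> nat list \<Rightarrow> nat list \<Rightarrow> (nat \<Rightarrow> 'm) \<Rightarrow> ('o,'m) tmor" where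
  "mksec C cs ds a b h = (ds, cs, b, map (\<lambda>j. map (\<lambda>t. if b!j + t = jx a (length cs) j then h j
       else arb C (ds!j) (cs!(b!j+t))) [0..<b!Suc j - b!j]) [0..<length ds])"

lemma jx_props:
  assumes "sorted a" "set a = {0..n}" "length a = Suc m" "j < n"
  shows "jx a m j < m" "a!(jx a m j) = j" "a!Suc (jx a m j) = Suc j"
proof -
  have "\<exists>i. i < m \<and> a!i = j \<and> a!Suc i = Suc j" using jump_exists[OF assms] by blast
  then have "jx a m j < m \<and> a!(jx a m j) = j \<and> a!Suc (jx a m j) = Suc j"
    unfolding jx_def by (rule someI_ex)
  then show "jx a m j < m" "a!(jx a m j) = j" "a!Suc (jx a m j) = Suc j" by auto
qed

lemma jx_unique:
  assumes "sorted a" "set a = {0..n}" "length a = Suc m" "i < m" "a!i < a!Suc i"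
  shows "a!i < n" "jx a m (a!i) = i"
proof -
  have "a!Suc i \<le> n" using nth_mem[of "Suc i" a] assms by auto
  then show an: "a!i < n" using assms(5) by simp
  note J = jx_props[OF assms(1,2,3) an]
  have st: "a!Suc i = Suc (a!i)" using surj_step[OF assms(1,2), of i] assms by simp
  show "jx a m (a!i) = i"
  proof (rule ccontr)
    assume ne: "jx a m (a!i) \<noteq> i"
    show False
    proof (cases "jx a m (a!i) < i")
      case True
      then have "a!Suc (jx a m (a!i)) \<le> a!i" using assms by (simp add: sorted_nth_mono)
      then show False using J(3) by simp
    next
      case False
      then have "i < jx a m (a!i)" using ne by simp
      then have "a!Suc i \<le> a!(jx a m (a!i))" using assms J(1) by (simp add: sorted_nth_mono)
      then show False using J(2) st by simp
    qed
  qed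
qed

lemma secb_bounds:
  assumes "sorted a" "set a = {0..n}" "length a = Suc m" "length b = Suc n"
    "\<forall>j\<le>n. b!j \<le> m \<and> a!(b!j) = j" "j < n"
  shows "b!j \<le> jx a m j" "jx a m j < b!Suc j"
proof -
  note J = jx_props[OF assms(1,2,3,6)]
  have bj: "b!j \<le> m" "a!(b!j) = j" "b!Suc j \<le> m" "a!(b!Suc j) = Suc j" using assms(5,6) by auto
  show "b!j \<le> jx a m j"
  proof (rule ccontr)
    assume "\<not> b!j \<le> jx a m j"
    then have "Suc (jx a m j) \<le> b!j" by simp
    then have "a!Suc (jx a m j) \<le> a!(b!j)" using assms(1,3) bj sorted_nth_mono[OF assms(1), of "Suc (jx a m j)" "b!j"] by simp
    then show False using J bj by simp
  qed
  show "jx a m j < b!Suc j"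
  proof (rule ccontr)
    assume "\<not> jx a m j < b!Suc j"
    then have "a!(b!Suc j) \<le> a!(jx a m j)" using assms(1,3) J sorted_nth_mono[OF assms(1), of "b!Suc j" "jx a m j"] by simp
    then show False using J bj by simp
  qed
qed



lemma arb_hom:
  assumes "\<forall>c\<in>Ob C. \<forall>d\<in>Ob C. hom C c d \<noteq> {}" "c \<in> Ob C" "d \<in> Ob C"
  shows "arb C c d \<in> Mor C" "Dom C (arb C c d) = c" "Cod C (arb C c d) = d"
proof -
  have "\<exists>g. g \<in> hom C c d" using assms by blast
  then have "arb C c d \<in> hom C c d" unfolding arb_def by (rule someI_ex)
  then show "arb C c d \<in> Mor C" "Dom C (arb C c d) = c" "Cod C (arb C c d) = d" by (auto simp: hom_def)
qed

lemma sec_mor: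
  assumes hne: "\<forall>c\<in>Ob C. \<forall>d\<in>Ob C. hom C c d \<noteq> {}"
    and sig: "(cs, ds, a, F) \<in> theta_minus C M"
    and lb: "length b = Suc (length ds)" and bc: "\<forall>j\<le>length ds. b!j \<le> length cs \<and> a!(b!j) = j"
    and hc: "\<forall>j<length ds. h j \<in> Mor C \<and> Dom C (h j) = ds!j \<and> Cod C (h j) = cs!(jx a (length cs) j)"
  shows "theta_mor C (mksec C cs ds a b h)"
proof -
  have phi: "theta_mor C (cs, ds, a, F)" and sa: "set a = {0..length ds}" using sig by (auto simp: theta_minus_unf)
  note P = theta_morD[OF phi]
  let ?m = "length cs" and ?n = "length ds"
  have sb: "sorted b" unfolding sorted_iff_nth_mono
  proof (intro allI impI)
    fix i j assume ij: "i \<le> j" "j < length b"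
    show "b!i \<le> b!j"
    proof (rule ccontr)
      assume "\<not> b!i \<le> b!j"
      then have lt: "b!j \<le> b!i" by simp
      have bi: "b!i \<le> ?m" "a!(b!i) = i" "a!(b!j) = j" using bc ij lb by auto
      have "b!i < length a" using bi(1) P(3) by simp
      then have "a!(b!j) \<le> a!(b!i)" using sorted_nth_mono[OF P(4) lt] by blast
      then have "j \<le> i" using bi by simp
      then show False using ij \<open>\<not> b!i \<le> b!j\<close> by simp
    qed
  qed
  show ?thesis unfolding mksec_def theta_mor_unf
  proof (intro conjI allI impI)
    show "set ds \<subseteq> Ob C" "set cs \<subseteq> Ob C" using P(1,2) by auto
    show "length b = Suc ?n" by (rule lb)
    show "sorted b" by (rule sb)
    show "\<forall>x\<in>set b. x \<le> ?m" using bc lb by (auto simp: in_set_conv_nth)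
    show "length (map (\<lambda>j. map (\<lambda>t. if b!j + t = jx a ?m j then h j
       else arb C (ds!j) (cs!(b!j+t))) [0..<b!Suc j - b!j]) [0..<?n]) = ?n" by simp
    fix j assume j: "j < ?n"
    let ?H = "map (\<lambda>j. map (\<lambda>t. if b!j + t = jx a ?m j then h j
       else arb C (ds!j) (cs!(b!j+t))) [0..<b!Suc j - b!j]) [0..<?n]"
    show "length (?H!j) = b!Suc j - b!j" using j by simp
    fix t assume t: "t < length (?H!j)"
    then have t': "t < b!Suc j - b!j" using j by simp
    have "b!Suc j \<le> ?m" using bc j by simp
    then have bt: "b!j + t < ?m" using t' by arith
    have ob: "ds!j \<in> Ob C" "cs!(b!j+t) \<in> Ob C" using P(1,2) j bt by (auto simp: subset_iff)
    note A = arb_hom[OF hne ob]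
    have Hn: "?H!j!t = (if b!j + t = jx a ?m j then h j else arb C (ds!j) (cs!(b!j+t)))" using j t' by simp
    show "?H!j!t \<in> Mor C" using Hn A hc j by auto
    show "Dom C (?H!j!t) = ds!j" using Hn A hc j by auto
    show "Cod C (?H!j!t) = cs!(b!j + t)" using Hn A hc j by auto
  qed
qed

lemma sec_comp:
  assumes cat: "is_cat C" and hne: "\<forall>c\<in>Ob C. \<forall>d\<in>Ob C. hom C c d \<noteq> {}"
    and sig: "(cs, ds, a, F) \<in> theta_minus C M" and sig': "(cs, ds, a, F') \<in> theta_minus C M"
    and lb: "length b = Suc (length ds)" and bc: "\<forall>j\<le>length ds. b!j \<le> length cs \<and> a!(b!j) = j"
    and hc: "\<forall>j<length ds. h j \<in> Mor C \<and> Dom C (h j) = ds!j \<and> Cod C (h j) = cs!(jx a (length cs) j)"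
  shows "theta_comp C (cs, ds, a, F') (mksec C cs ds a b h) =
     (ds, ds, map (\<lambda>x. a!x) b, map (\<lambda>j. [Cmp C (F'!(jx a (length cs) j)!0) (h j)]) [0..<length ds])"
proof -
  let ?m = "length cs" and ?n = "length ds"
  define H where "H = map (\<lambda>j. map (\<lambda>t. if b!j + t = jx a ?m j then h j
       else arb C (ds!j) (cs!(b!j+t))) [0..<b!Suc j - b!j]) [0..<?n]"
  have ms: "mksec C cs ds a b h = (ds, cs, b, H)" unfolding mksec_def H_def by simp
  have bm: "theta_mor C (ds, cs, b, H)" using sec_mor[OF hne sig lb bc hc] ms by simp
  have phi': "theta_mor C (cs, ds, a, F')" and sa: "set a = {0..length ds}" using sig' by (auto simp: theta_minus_unf)
  note P = theta_morD[OF phi'] and B = theta_morD[OF bm]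
  have comps: "map (tH C b H F') [0..<?n] = map (\<lambda>j. [Cmp C (F'!(jx a ?m j)!0) (h j)]) [0..<?n]"
  proof (rule nth_equalityI)
    fix j assume "j < length (map (tH C b H F') [0..<?n])"
    then have j: "j < ?n" by simp
    have L: "length (tH C b H F' j) = 1" using tH_length[OF bm phi' j] bc j by simp
    have k0: "0 < a!(b!Suc j) - a!(b!j)" using bc j by simp
    obtain j' l where E: "b!j \<le> j'" "j' < b!Suc j" "j' < ?m" "l < a!Suc j' - a!j'" "0 = a!j' - a!(b!j) + l"
      "tH C b H F' j ! 0 = Cmp C (F'!j'!l) (H!j!(j' - b!j))"
      using comp_entry[OF bm phi' j k0] by blast
    have "a!(b!j) \<le> a!j'" using E(1,3) P(3,4) by (simp add: sorted_nth_mono)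
    then have aj: "a!j' = j" "l = 0" using E(5) bc j by auto
    have jmp: "a!j' < a!Suc j'" using E(4) by simp
    have jxe: "jx a ?m j = j'" using jx_unique[OF P(4) sa P(3) E(3) jmp] aj by simp
    have "H!j!(j' - b!j) = h j" unfolding H_def using j E(1,2) jxe by simp
    then have "tH C b H F' j = [Cmp C (F'!(jx a ?m j)!0) (h j)]"
      using L E(6) aj jxe by (cases "tH C b H F' j") auto
    then show "map (tH C b H F') [0..<?n] ! j = map (\<lambda>j. [Cmp C (F'!(jx a ?m j)!0) (h j)]) [0..<?n] ! j"
      using j by simp
  qed simp
  show ?thesis unfolding ms theta_comp_eq using comps by simp
qed



lemma Gamma_theta: "g \<in> Gamma (ThetaCat C) s \<longleftrightarrow> theta_mor C g \<and> fst g = fst (snd s) \<and>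
    fst (snd g) = fst s \<and> theta_comp C s g = theta_id C (fst (snd s))"
  by (simp add: Gamma_def ThetaCat_def)

lemma sec_gamma_iff:
  assumes cat: "is_cat C" and hne: "\<forall>c\<in>Ob C. \<forall>d\<in>Ob C. hom C c d \<noteq> {}"
    and sig': "(cs, ds, a, F') \<in> theta_minus C M"
    and lb: "length b = Suc (length ds)" and bc: "\<forall>j\<le>length ds. b!j \<le> length cs \<and> a!(b!j) = j"
    and hc: "\<forall>j<length ds. h j \<in> Mor C \<and> Dom C (h j) = ds!j \<and> Cod C (h j) = cs!(jx a (length cs) j)"
  shows "mksec C cs ds a b h \<in> Gamma (ThetaCat C) (cs, ds, a, F') \<longleftrightarrow>
     (\<forall>j<length ds. Cmp C (F'!(jx a (length cs) j)!0) (h j) = Idn C (ds!j))"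
proof -
  obtain H where ms: "mksec C cs ds a b h = (ds, cs, b, H)" unfolding mksec_def by blast
  have mor: "theta_mor C (mksec C cs ds a b h)" by (rule sec_mor[OF hne sig' lb bc hc])
  have sc: "theta_comp C (cs, ds, a, F') (mksec C cs ds a b h) =
     (ds, ds, map (\<lambda>x. a!x) b, map (\<lambda>j. [Cmp C (F'!(jx a (length cs) j)!0) (h j)]) [0..<length ds])"
    by (rule sec_comp[OF cat hne sig' sig' lb bc hc])
  have ab: "map (\<lambda>x. a!x) b = [0..<Suc (length ds)]"
  proof (rule nth_equalityI)
    show "length (map (\<lambda>x. a!x) b) = length [0..<Suc (length ds)]" using lb by simp
    fix j assume "j < length (map (\<lambda>x. a!x) b)"
    then have j: "j \<le> length ds" using lb by simp
    then have "a!(b!j) = j" using bc by simp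
    then show "map (\<lambda>x. a!x) b ! j = [0..<Suc (length ds)] ! j" using j lb
      by (simp only: nth_map nth_upt)
  qed
  have e1: "mksec C cs ds a b h \<in> Gamma (ThetaCat C) (cs, ds, a, F') \<longleftrightarrow>
      theta_comp C (cs, ds, a, F') (mksec C cs ds a b h) = theta_id C ds"
    unfolding Gamma_theta using mor ms by simp
  have e2: "theta_comp C (cs, ds, a, F') (mksec C cs ds a b h) = theta_id C ds \<longleftrightarrow>
     map (\<lambda>j. [Cmp C (F'!(jx a (length cs) j)!0) (h j)]) [0..<length ds] = map (\<lambda>c. [Idn C c]) ds"
    unfolding sc theta_id_def ab by simp
  have e3: "(map (\<lambda>j. [Cmp C (F'!(jx a (length cs) j)!0) (h j)]) [0..<length ds] = map (\<lambda>c. [Idn C c]) ds) \<longleftrightarrow>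
     (\<forall>j<length ds. Cmp C (F'!(jx a (length cs) j)!0) (h j) = Idn C (ds!j))"
  proof
    assume eq: "map (\<lambda>j. [Cmp C (F'!(jx a (length cs) j)!0) (h j)]) [0..<length ds] = map (\<lambda>c. [Idn C c]) ds"
    show "\<forall>j<length ds. Cmp C (F'!(jx a (length cs) j)!0) (h j) = Idn C (ds!j)"
    proof (intro allI impI)
      fix j assume j: "j < length ds"
      have "map (\<lambda>j. [Cmp C (F'!(jx a (length cs) j)!0) (h j)]) [0..<length ds] ! j = [Cmp C (F'!(jx a (length cs) j)!0) (h j)]"
        using j by simp
      moreover have "map (\<lambda>c. [Idn C c]) ds ! j = [Idn C (ds!j)]" using j by simp
      ultimately show "Cmp C (F'!(jx a (length cs) j)!0) (h j) = Idn C (ds!j)" using eq by simp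
    qed
  next
    assume all: "\<forall>j<length ds. Cmp C (F'!(jx a (length cs) j)!0) (h j) = Idn C (ds!j)"
    show "map (\<lambda>j. [Cmp C (F'!(jx a (length cs) j)!0) (h j)]) [0..<length ds] = map (\<lambda>c. [Idn C c]) ds"
    proof (rule nth_equalityI)
      fix j assume "j < length (map (\<lambda>j. [Cmp C (F'!(jx a (length cs) j)!0) (h j)]) [0..<length ds])"
      then have j: "j < length ds" by simp
      show "map (\<lambda>j. [Cmp C (F'!(jx a (length cs) j)!0) (h j)]) [0..<length ds] ! j = map (\<lambda>c. [Idn C c]) ds ! j"
        using j all by simp
    qed simp
  qed
  show ?thesis using e1 e2 e3 by simp
qed

definition bl :: "nat list \<Rightarrow> nat \<Rightarrow> nat \<Rightarrow> nat list" where
  "bl a m n = map (\<lambda>j. if j < n then jx a m j else m) [0..<Suc n]"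
definition bfst :: "nat list \<Rightarrow> nat \<Rightarrow> nat \<Rightarrow> nat list" where
  "bfst a m n = map (\<lambda>j. if j = 0 then 0 else Suc (jx a m (j - 1))) [0..<Suc n]"
definition hcan :: "('o,'m) cat \<Rightarrow> 'm list list \<Rightarrow> nat list \<Rightarrow> nat \<Rightarrow> nat \<Rightarrow> 'm" where
  "hcan C F a m j = (SOME g. g \<in> Gamma C (F!(jx a m j)!0))"

lemma bl_ok:
  assumes "sorted a" "set a = {0..n}" "length a = Suc m"
  shows "length (bl a m n) = Suc n" "\<forall>j\<le>n. bl a m n!j \<le> m \<and> a!(bl a m n!j) = j"
proof -
  show "length (bl a m n) = Suc n" by (simp add: bl_def)
  show "\<forall>j\<le>n. bl a m n!j \<le> m \<and> a!(bl a m n!j) = j"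
  proof (intro allI impI)
    fix j assume j: "j \<le> n"
    show "bl a m n!j \<le> m \<and> a!(bl a m n!j) = j"
    proof (cases "j < n")
      case True
      then show ?thesis using jx_props[OF assms True] j unfolding bl_def by (simp del: upt_Suc add: nth_upt)
    next
      case False
      then show ?thesis using surj_last[OF assms] j unfolding bl_def by (simp del: upt_Suc add: nth_upt)
    qed
  qed
qed

lemma bfst_ok:
  assumes "sorted a" "set a = {0..n}" "length a = Suc m"
  shows "length (bfst a m n) = Suc n" "\<forall>j\<le>n. bfst a m n!j \<le> m \<and> a!(bfst a m n!j) = j"
proof -
  show "length (bfst a m n) = Suc n" by (simp add: bfst_def)
  show "\<forall>j\<le>n. bfst a m n!j \<le> m \<and> a!(bfst a m n!j) = j"
  proof (intro allI impI)
    fix j assume j: "j \<le> n"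
    show "bfst a m n!j \<le> m \<and> a!(bfst a m n!j) = j"
    proof (cases "j = 0")
      case True
      then show ?thesis using surj_first[OF assms(1,2)] unfolding bfst_def by (simp del: upt_Suc add: nth_upt)
    next
      case False
      then have "j - 1 < n" using j by simp
      then show ?thesis using jx_props[OF assms, of "j - 1"] j False unfolding bfst_def
        by (simp del: upt_Suc add: nth_upt)
    qed
  qed
qed

lemma hcan_ok:
  assumes ez1: "\<forall>s\<in>Mminus M. Gamma C s \<noteq> {}" and sig: "(cs, ds, a, F) \<in> theta_minus C M"
    and j: "j < length ds"
  shows "hcan C F a (length cs) j \<in> Gamma C (F!(jx a (length cs) j)!0)"
    "F!(jx a (length cs) j)!0 \<in> Mor C" "Dom C (F!(jx a (length cs) j)!0) = cs!(jx a (length cs) j)"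
    "Cod C (F!(jx a (length cs) j)!0) = ds!j"
    "F!(jx a (length cs) j)!0 \<in> Mminus M"
proof -
  have phi: "theta_mor C (cs, ds, a, F)" and sa: "set a = {0..length ds}"
    and fm: "\<forall>i<length cs. a ! i < a ! Suc i \<longrightarrow> F ! i ! 0 \<in> Mminus M" using sig by (auto simp: theta_minus_unf)
  note P = theta_morD[OF phi] and J = jx_props[OF P(4) sa P(3) j]
  have z: "0 < a!Suc (jx a (length cs) j) - a!(jx a (length cs) j)" using J by simp
  show mm: "F!(jx a (length cs) j)!0 \<in> Mminus M" using fm J by simp
  show "F!(jx a (length cs) j)!0 \<in> Mor C" "Dom C (F!(jx a (length cs) j)!0) = cs!(jx a (length cs) j)"
    "Cod C (F!(jx a (length cs) j)!0) = ds!j" using P(8,9,10)[OF J(1) z] J by auto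
  have "\<exists>g. g \<in> Gamma C (F!(jx a (length cs) j)!0)" using ez1 mm by blast
  then show "hcan C F a (length cs) j \<in> Gamma C (F!(jx a (length cs) j)!0)" unfolding hcan_def by (rule someI_ex)
qed

lemma gammaD:
  assumes "g \<in> Gamma C s"
  shows "g \<in> Mor C" "Dom C g = Cod C s" "Cod C g = Dom C s" "Cmp C s g = Idn C (Cod C s)"
  using assms by (auto simp: Gamma_def)

lemma canon_sec:
  assumes cat: "is_cat C" and hne: "\<forall>c\<in>Ob C. \<forall>d\<in>Ob C. hom C c d \<noteq> {}"
    and ez1: "\<forall>s\<in>Mminus M. Gamma C s \<noteq> {}" and sig: "(cs, ds, a, F) \<in> theta_minus C M"
    and lb: "length b = Suc (length ds)" and bc: "\<forall>j\<le>length ds. b!j \<le> length cs \<and> a!(b!j) = j"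
    and h: "\<forall>j<length ds. h j \<in> Gamma C (F!(jx a (length cs) j)!0)"
  shows "mksec C cs ds a b h \<in> Gamma (ThetaCat C) (cs, ds, a, F)"
proof -
  have both: "\<forall>j<length ds. (h j \<in> Mor C \<and> Dom C (h j) = ds!j \<and> Cod C (h j) = cs!(jx a (length cs) j)) \<and>
     Cmp C (F!(jx a (length cs) j)!0) (h j) = Idn C (ds!j)"
  proof (intro allI impI)
    fix j assume j: "j < length ds"
    note G = gammaD[OF h[rule_format, OF j]] and K = hcan_ok[OF ez1 sig j]
    show "(h j \<in> Mor C \<and> Dom C (h j) = ds!j \<and> Cod C (h j) = cs!(jx a (length cs) j)) \<and>
     Cmp C (F!(jx a (length cs) j)!0) (h j) = Idn C (ds!j)"
      using G K(3,4) by simp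
  qed
  then have hc: "\<forall>j<length ds. h j \<in> Mor C \<and> Dom C (h j) = ds!j \<and> Cod C (h j) = cs!(jx a (length cs) j)"
    by blast
  show ?thesis using sec_gamma_iff[OF cat hne sig lb bc hc] both by blast
qed



lemma hc_of:
  assumes ez1: "\<forall>s\<in>Mminus M. Gamma C s \<noteq> {}" and sig: "(cs, ds, a, F) \<in> theta_minus C M"
    and h: "\<forall>j<length ds. h j \<in> Gamma C (F!(jx a (length cs) j)!0)"
  shows "\<forall>j<length ds. h j \<in> Mor C \<and> Dom C (h j) = ds!j \<and> Cod C (h j) = cs!(jx a (length cs) j)"
proof (intro allI impI)
  fix j assume j: "j < length ds"
  note G = gammaD[OF h[rule_format, OF j]] and K = hcan_ok[OF ez1 sig j]
  show "h j \<in> Mor C \<and> Dom C (h j) = ds!j \<and> Cod C (h j) = cs!(jx a (length cs) j)"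
    using G K(3,4) by simp
qed

lemma minus_basic:
  assumes "(cs, ds, a, F) \<in> theta_minus C M"
  shows "sorted a" "set a = {0..length ds}" "length a = Suc (length cs)" "theta_mor C (cs, ds, a, F)"
  using assms by (auto simp: theta_minus_unf theta_mor_unf)

lemma ez_nonempty:
  assumes cat: "is_cat C" and hne: "\<forall>c\<in>Ob C. \<forall>d\<in>Ob C. hom C c d \<noteq> {}"
    and ez1: "\<forall>s\<in>Mminus M. Gamma C s \<noteq> {}" and sig: "(cs, ds, a, F) \<in> theta_minus C M"
  shows "Gamma (ThetaCat C) (cs, ds, a, F) \<noteq> {}"
proof -
  note B = minus_basic[OF sig] and O = bl_ok[OF minus_basic(1-3)[OF sig]]
  have "\<forall>j<length ds. hcan C F a (length cs) j \<in> Gamma C (F!(jx a (length cs) j)!0)"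
    using hcan_ok(1)[OF ez1 sig] by blast
  then show ?thesis using canon_sec[OF cat hne ez1 sig O] by blast
qed

lemma gamma_sub:
  assumes cat: "is_cat C" and hne: "\<forall>c\<in>Ob C. \<forall>d\<in>Ob C. hom C c d \<noteq> {}"
    and ez1: "\<forall>s\<in>Mminus M. Gamma C s \<noteq> {}" and sig: "(cs, ds, a, F) \<in> theta_minus C M"
    and sig': "(cs, ds, a, F') \<in> theta_minus C M"
    and sub: "Gamma (ThetaCat C) (cs, ds, a, F) \<subseteq> Gamma (ThetaCat C) (cs, ds, a, F')"
    and i: "i < length cs" and ji: "a!i < a!Suc i"
  shows "Gamma C (F!i!0) \<subseteq> Gamma C (F'!i!0)"
proof
  fix h0 assume h0: "h0 \<in> Gamma C (F!i!0)"
  note B = minus_basic[OF sig] and O = bl_ok[OF minus_basic(1-3)[OF sig]]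
  let ?m = "length cs" and ?n = "length ds"
  define j where "j = a!i"
  have jn: "j < ?n" "jx a ?m j = i" using jx_unique[OF B(1,2,3) i ji] unfolding j_def by auto
  define h where "h j' = (if j' = j then h0 else hcan C F a ?m j')" for j'
  have hg: "\<forall>j'<?n. h j' \<in> Gamma C (F!(jx a ?m j')!0)"
    using hcan_ok(1)[OF ez1 sig] h0 jn unfolding h_def by auto
  have "mksec C cs ds a (bl a ?m ?n) h \<in> Gamma (ThetaCat C) (cs, ds, a, F)"
    by (rule canon_sec[OF cat hne ez1 sig O hg])
  then have "mksec C cs ds a (bl a ?m ?n) h \<in> Gamma (ThetaCat C) (cs, ds, a, F')" using sub by blast
  then have all: "\<forall>j'<?n. Cmp C (F'!(jx a ?m j')!0) (h j') = Idn C (ds!j')"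
    using sec_gamma_iff[OF cat hne sig' O hc_of[OF ez1 sig hg]] by blast
  have c: "Cmp C (F'!i!0) h0 = Idn C (ds!j)" using all[rule_format, OF jn(1)] jn unfolding h_def by simp
  note K = hcan_ok[OF ez1 sig jn(1)] and K' = hcan_ok[OF ez1 sig' jn(1)] and G = gammaD[OF h0]
  show "h0 \<in> Gamma C (F'!i!0)" unfolding Gamma_def
    using G K(3,4) K'(3,4) c jn by simp
qed

lemma bounds_first_last:
  assumes "sorted a" "set a = {0..n}" "length a = Suc m" "i \<le> m"
  shows "bfst a m n ! (a!i) \<le> i" "i \<le> bl a m n ! (a!i)"
proof -
  have an: "a!i \<le> n" using nth_mem[of i a] assms by auto
  show "bfst a m n ! (a!i) \<le> i"
  proof (cases "a!i = 0")
    case True then show ?thesis unfolding bfst_def using an by (simp del: upt_Suc add: nth_upt)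
  next
    case False
    then have j1: "a!i - 1 < n" using an by simp
    note J = jx_props[OF assms(1,2,3) j1]
    have "jx a m (a!i - 1) < i"
    proof (rule ccontr)
      assume "\<not> jx a m (a!i - 1) < i"
      then have "a!i \<le> a!(jx a m (a!i - 1))" using assms(1,3) J(1) by (simp add: sorted_nth_mono)
      then show False using J(2) False by simp
    qed
    then show ?thesis unfolding bfst_def using an False by (simp del: upt_Suc add: nth_upt)
  qed
  show "i \<le> bl a m n ! (a!i)"
  proof (cases "a!i < n")
    case True
    note J = jx_props[OF assms(1,2,3) True]
    have "i < Suc (jx a m (a!i))"
    proof (rule ccontr)
      assume "\<not> i < Suc (jx a m (a!i))"
      then have "a!Suc (jx a m (a!i)) \<le> a!i" using assms(1,3,4) by (simp add: sorted_nth_mono)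
      then show False using J(3) by simp
    qed
    then show ?thesis unfolding bl_def using True by (simp del: upt_Suc add: nth_upt)
  next
    case False
    then show ?thesis unfolding bl_def using an assms(4) by (simp del: upt_Suc add: nth_upt)
  qed
qed

lemma sec_index:
  assumes "mksec C cs ds a b h \<in> Gamma (ThetaCat C) (cs, ds, a', F')" "length b = Suc (length ds)" "j \<le> length ds"
  shows "a'!(b!j) = j"
proof -
  obtain H where ms: "mksec C cs ds a b h = (ds, cs, b, H)" unfolding mksec_def by blast
  have "theta_comp C (cs, ds, a', F') (ds, cs, b, H) = theta_id C ds"
    using assms(1) ms unfolding Gamma_theta by simp
  then have "map (\<lambda>x. a'!x) b = [0..<Suc (length ds)]"
    unfolding theta_comp_eq theta_id_def by simp
  then have "map (\<lambda>x. a'!x) b ! j = [0..<Suc (length ds)] ! j" by simp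
  then show ?thesis using assms(2,3) by (simp only: nth_map nth_upt)
qed

lemma ez_inj:
  assumes cat: "is_cat C" and hne: "\<forall>c\<in>Ob C. \<forall>d\<in>Ob C. hom C c d \<noteq> {}"
    and ez1: "\<forall>s\<in>Mminus M. Gamma C s \<noteq> {}"
    and ez2: "\<forall>s\<in>Mminus M. \<forall>s'\<in>Mminus M. Dom C s = Dom C s' \<and> Cod C s = Cod C s' \<and>
        Gamma C s = Gamma C s' \<longrightarrow> s = s'"
    and sig: "(cs, ds, a, F) \<in> theta_minus C M" and sig': "(cs, ds, a', F') \<in> theta_minus C M"
    and geq: "Gamma (ThetaCat C) (cs, ds, a, F) = Gamma (ThetaCat C) (cs, ds, a', F')"
  shows "(cs, ds, a, F) = (cs, ds, a', F')"
proof -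
  let ?m = "length cs" and ?n = "length ds"
  note B = minus_basic[OF sig] and B' = minus_basic[OF sig']
  note Ol = bl_ok[OF B(1-3)] and Of = bfst_ok[OF B(1-3)]
  have hg: "\<forall>j<?n. hcan C F a ?m j \<in> Gamma C (F!(jx a ?m j)!0)" using hcan_ok(1)[OF ez1 sig] by blast
  have gl: "mksec C cs ds a (bl a ?m ?n) (hcan C F a ?m) \<in> Gamma (ThetaCat C) (cs, ds, a', F')"
    using canon_sec[OF cat hne ez1 sig Ol hg] geq by simp
  have gf: "mksec C cs ds a (bfst a ?m ?n) (hcan C F a ?m) \<in> Gamma (ThetaCat C) (cs, ds, a', F')"
    using canon_sec[OF cat hne ez1 sig Of hg] geq by simp
  have aa: "a' = a"
  proof (rule nth_equalityI)
    show "length a' = length a" using B(3) B'(3) by simp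
    fix i assume "i < length a'"
    then have i: "i \<le> ?m" using B'(3) by simp
    have an: "a!i \<le> ?n" using nth_mem[of i a] B(2,3) i by auto
    note bd = bounds_first_last[OF B(1-3) i]
    have l1: "a'!(bl a ?m ?n ! (a!i)) = a!i" by (rule sec_index[OF gl Ol(1) an])
    have l2: "a'!(bfst a ?m ?n ! (a!i)) = a!i" by (rule sec_index[OF gf Of(1) an])
    have blm: "bl a ?m ?n ! (a!i) \<le> ?m" using Ol(2) an by blast
    have "a'!(bfst a ?m ?n ! (a!i)) \<le> a'!i" using bd(1) i B'(1,3) by (simp add: sorted_nth_mono)
    moreover have "a'!i \<le> a'!(bl a ?m ?n ! (a!i))" using bd(2) blm B'(1,3) by (simp add: sorted_nth_mono)
    ultimately show "a'!i = a!i" using l1 l2 by simp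
  qed
  have sig'': "(cs, ds, a, F') \<in> theta_minus C M" using sig' aa by simp
  note P = theta_morD[OF B(4)] and P' = theta_morD[OF B'(4)[unfolded aa]]
  have FF: "F' = F"
  proof (rule nth_equalityI)
    show "length F' = length F" using P(6) P'(6) by simp
    fix i assume "i < length F'"
    then have i: "i < ?m" using P'(6) by simp
    show "F'!i = F!i"
    proof (cases "a!i < a!Suc i")
      case False
      then show ?thesis using P(7)[OF i] P'(7)[OF i] by simp
    next
      case True
      have g1: "Gamma C (F!i!0) \<subseteq> Gamma C (F'!i!0)"
        by (rule gamma_sub[OF cat hne ez1 sig sig'' _ i True]) (use geq aa in simp)
      have g2: "Gamma C (F'!i!0) \<subseteq> Gamma C (F!i!0)"
        by (rule gamma_sub[OF cat hne ez1 sig'' sig _ i True]) (use geq aa in simp)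
      have jn: "a!i < ?n" "jx a ?m (a!i) = i" using jx_unique[OF B(1,2,3) i True] by auto
      note K = hcan_ok[OF ez1 sig jn(1)] and K' = hcan_ok[OF ez1 sig'' jn(1)]
      have "F!i!0 = F'!i!0" using ez2 K(2-5) K'(2-5) g1 g2 jn(2) by auto
      moreover have "length (F!i) = 1" "length (F'!i) = 1"
        using P(7)[OF i] P'(7)[OF i] surj_step[OF B(1,2), of i] True B(3) i by auto
      ultimately show ?thesis by (metis length_0_conv length_Suc_conv nth_Cons_0 One_nat_def)
    qed
  qed
  show ?thesis using aa FF by simp
qed



lemma fst_theta_id[simp]: "fst (theta_id C cs) = cs" by (simp add: theta_id_def)

theorem mainTheorem10:
  fixes C :: "('o, 'm) cat" and M :: "('o, 'm) mreedy_str"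
  assumes "is_multi_reedy C M"
    and "\<forall>c\<in>Ob C. \<forall>d\<in>Ob C. hom C c d \<noteq> {}"
    and "is_ez_reedy C (underlying_reedy C M)"
  shows "is_ez_reedy (ThetaCat C) (ThetaReedy C M)"
proof -
  note MR = assms(1) and hne = assms(2)
  have cat: "is_cat C" by (rule mreedyD(1)[OF MR])
  have ez1: "\<forall>s\<in>Mminus M. Gamma C s \<noteq> {}"
    and ez2: "\<forall>s\<in>Mminus M. \<forall>s'\<in>Mminus M. Dom C s = Dom C s' \<and> Cod C s = Cod C s' \<and>
        Gamma C s = Gamma C s' \<longrightarrow> s = s'"
    using assms(3) unfolding is_ez_reedy_def underlying_reedy_def by auto
  have TR: "Rminus (ThetaReedy C M) = theta_minus C M" "Rplus (ThetaReedy C M) = theta_plus C M"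
    "Rdeg (ThetaReedy C M) = theta_deg M" by (simp_all add: ThetaReedy_def)
  have TC: "Mor (ThetaCat C) = {phi. theta_mor C phi}" "Dom (ThetaCat C) = fst" "Cod (ThetaCat C) = (\<lambda>phi. fst (snd phi))"
    "Cmp (ThetaCat C) = theta_comp C" "Idn (ThetaCat C) = theta_id C" by (simp_all add: ThetaCat_def)
  have fac: "\<forall>f\<in>Mor (ThetaCat C).
        (\<exists>p q. q \<in> theta_minus C M \<and> p \<in> theta_plus C M \<and> fst (snd q) = fst p \<and> f = theta_comp C p q) \<and>
        (\<forall>p q p' q'. q \<in> theta_minus C M \<and> p \<in> theta_plus C M \<and> fst (snd q) = fst p \<and> f = theta_comp C p q \<and>
                     q' \<in> theta_minus C M \<and> p' \<in> theta_plus C M \<and> fst (snd q') = fst p' \<and> f = theta_comp C p' q'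
                     \<longrightarrow> p = p' \<and> q = q')"
  proof
    fix f assume "f \<in> Mor (ThetaCat C)"
    then have phi: "theta_mor C f" by (simp add: TC)
    obtain cs ds a F where fe: "f = (cs, ds, a, F)" by (cases f) auto
    show "(\<exists>p q. q \<in> theta_minus C M \<and> p \<in> theta_plus C M \<and> fst (snd q) = fst p \<and> f = theta_comp C p q) \<and>
        (\<forall>p q p' q'. q \<in> theta_minus C M \<and> p \<in> theta_plus C M \<and> fst (snd q) = fst p \<and> f = theta_comp C p q \<and>
                     q' \<in> theta_minus C M \<and> p' \<in> theta_plus C M \<and> fst (snd q') = fst p' \<and> f = theta_comp C p' q'
                     \<longrightarrow> p = p' \<and> q = q')"
      using factor_exists[OF MR phi[unfolded fe]] factor_unique[OF MR phi] fe by blast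
  qed
  have pdeg: "\<forall>f\<in>theta_plus C M. theta_deg M (fst f) \<le> theta_deg M (fst (snd f)) \<and>
        (theta_deg M (fst f) = theta_deg M (fst (snd f)) \<longrightarrow> f = theta_id C (fst f))"
  proof
    fix f assume f: "f \<in> theta_plus C M"
    obtain cs ds a F where fe: "f = (cs, ds, a, F)" by (cases f) auto
    show "theta_deg M (fst f) \<le> theta_deg M (fst (snd f)) \<and>
        (theta_deg M (fst f) = theta_deg M (fst (snd f)) \<longrightarrow> f = theta_id C (fst f))"
      using plus_deg[OF MR f[unfolded fe]] fe by simp
  qed
  have mdeg: "\<forall>f\<in>theta_minus C M. theta_deg M (fst (snd f)) \<le> theta_deg M (fst f) \<and>
        (theta_deg M (fst (snd f)) = theta_deg M (fst f) \<longrightarrow> f = theta_id C (fst f))"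
  proof
    fix f assume f: "f \<in> theta_minus C M"
    obtain cs ds a F where fe: "f = (cs, ds, a, F)" by (cases f) auto
    show "theta_deg M (fst (snd f)) \<le> theta_deg M (fst f) \<and>
        (theta_deg M (fst (snd f)) = theta_deg M (fst f) \<longrightarrow> f = theta_id C (fst f))"
      using minus_deg[OF MR f[unfolded fe]] fe by simp
  qed
  have reedy: "is_reedy (ThetaCat C) (ThetaReedy C M)"
    unfolding is_reedy_def TR
  proof (intro conjI)
    show "is_cat (ThetaCat C)" by (rule theta_is_cat[OF cat])
    show "wide_subcat (ThetaCat C) (theta_minus C M)" by (rule minus_wide[OF MR])
    show "wide_subcat (ThetaCat C) (theta_plus C M)" by (rule plus_wide[OF MR])
    show "\<forall>f\<in>Mor (ThetaCat C).
        (\<exists>p q. q \<in> theta_minus C M \<and> p \<in> theta_plus C M \<and> Cod (ThetaCat C) q = Dom (ThetaCat C) p \<and> f = Cmp (ThetaCat C) p q) \<and>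
        (\<forall>p q p' q'. q \<in> theta_minus C M \<and> p \<in> theta_plus C M \<and> Cod (ThetaCat C) q = Dom (ThetaCat C) p \<and> f = Cmp (ThetaCat C) p q \<and>
                     q' \<in> theta_minus C M \<and> p' \<in> theta_plus C M \<and> Cod (ThetaCat C) q' = Dom (ThetaCat C) p' \<and> f = Cmp (ThetaCat C) p' q'
                     \<longrightarrow> p = p' \<and> q = q')"
      using fac unfolding TC .
    show "\<forall>f\<in>theta_plus C M. theta_deg M (Dom (ThetaCat C) f) \<le> theta_deg M (Cod (ThetaCat C) f) \<and>
        (theta_deg M (Dom (ThetaCat C) f) = theta_deg M (Cod (ThetaCat C) f) \<longrightarrow> f = Idn (ThetaCat C) (Dom (ThetaCat C) f))"
      using pdeg unfolding TC .
    show "\<forall>f\<in>theta_minus C M. theta_deg M (Cod (ThetaCat C) f) \<le> theta_deg M (Dom (ThetaCat C) f) \<and>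
        (theta_deg M (Cod (ThetaCat C) f) = theta_deg M (Dom (ThetaCat C) f) \<longrightarrow> f = Idn (ThetaCat C) (Dom (ThetaCat C) f))"
      using mdeg unfolding TC .
  qed
  have ne: "\<forall>s\<in>theta_minus C M. Gamma (ThetaCat C) s \<noteq> {}"
  proof
    fix s assume s: "s \<in> theta_minus C M"
    obtain cs ds a F where fe: "s = (cs, ds, a, F)" by (cases s) auto
    show "Gamma (ThetaCat C) s \<noteq> {}" using ez_nonempty[OF cat hne ez1 s[unfolded fe]] fe by simp
  qed
  have inj: "\<forall>s\<in>theta_minus C M. \<forall>s'\<in>theta_minus C M. fst s = fst s' \<and> fst (snd s) = fst (snd s') \<and>
        Gamma (ThetaCat C) s = Gamma (ThetaCat C) s' \<longrightarrow> s = s'"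
  proof (intro ballI impI)
    fix s s' assume s: "s \<in> theta_minus C M" and s': "s' \<in> theta_minus C M"
      and h: "fst s = fst s' \<and> fst (snd s) = fst (snd s') \<and> Gamma (ThetaCat C) s = Gamma (ThetaCat C) s'"
    obtain cs ds a F where fe: "s = (cs, ds, a, F)" by (cases s) auto
    obtain cs' ds' a' F' where fe': "s' = (cs', ds', a', F')" by (cases s') auto
    have e: "cs' = cs" "ds' = ds" using h fe fe' by auto
    show "s = s'" using ez_inj[OF cat hne ez1 ez2 s[unfolded fe] s'[unfolded fe' e]] h fe fe' e by simp
  qed
  show ?thesis unfolding is_ez_reedy_def TR
  proof (intro conjI reedy ne)
    show "\<forall>s\<in>theta_minus C M. \<forall>s'\<in>theta_minus C M. Dom (ThetaCat C) s = Dom (ThetaCat C) s' \<and>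
       Cod (ThetaCat C) s = Cod (ThetaCat C) s' \<and> Gamma (ThetaCat C) s = Gamma (ThetaCat C) s' \<longrightarrow> s = s'"
      using inj unfolding TC .
  qed
qed


end
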